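(* Let $\mathbf{A}\in\mathbb{R}^{n\times n}$ and $\mathbf{C}_i\in\mathbb{R}^{r_i\times n}$ for $i=1,\dots,N$, and suppose the pair $(\mathbf{A},\mathbf{C})$ is observable, where $\mathbf{C}=[\mathbf{C}_1^T\ \cdots\ \mathbf{C}_N^T]^T$. Let the sequence of directed graphs $\{\mathcal{G}[k]\}_{k\ge 0}$ satisfy the joint strong-connectivity assumption with parameter $T$. Then for every $\rho\in(0,1)$ there exist observer gains $\mathbf{L}_1,\dots,\mathbf{L}_N$ (with $\mathbf{L}_j$ of compatible size) such that, when every node runs the freshness-index algorithm described in the context, for all initial states $\mathbf{z}[0]$ and all initial estimates $\hat{\mathbf{z}}_i[0]$ there is a constant $c\ge 0$ with $$\|\hat{\mathbf{z}}_i[k]-\mathbf{z}[k]\|\le c\,\rho^k\quad\text{for all } k\ge (2N-1)(N-1)T \text{ and all } i\in\mathcal{V}.$$ Consequently the state estimates $\hat{\mathbf{x}}_i[k]:=\mathbf{T}\hat{\mathbf{z}}_i[k]$ satisfy $\|\hat{\mathbf{x}}_i[k]-\mathbf{x}[k]\|\le \|\mathbf{T}\|\,c\,\rho^k$ for the same range of $k$, i.e. every node's estimation error converges to zero exponentially fast at rate $\rho$.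
   Context: Graphs. Nodes $\mathcal{V}=\{1,\dots,N\}$. At each time $k\in\mathbb{N}=\{0,1,2,\dots\}$ there is a directed graph $\mathcal{G}[k]=(\mathcal{V},\mathcal{E}[k])$; $(i,j)\in\mathcal{E}[k]$ means node $i$ can send information to node $j$ at time $k$. $\mathcal{N}_i[k]=\{l\neq i:(l,i)\in\mathcal{E}[k]\}$ is the set of neighbors of $i$ at time $k$. The union graph over an interval of times has vertex set $\mathcal{V}$ and edge set the union of the edge sets over that interval. Joint strong-connectivity assumption: there is $T\in\mathbb{N}_+=\{1,2,\dots\}$ such that for every $k\in\mathbb{N}$ the union graph over $[kT,(k+1)T)$ is strongly connected. System. $\mathbf{x}[k+1]=\mathbf{A}\mathbf{x}[k]$, $\mathbf{y}_i[k]=\mathbf{C}_i\mathbf{x}[k]$. Since $(\mathbf{A},\mathbf{C})$ is observable, there is an invertible $\mathbf{T}$ (fixed throughout) such that with $\mathbf{x}[k]=\mathbf{T}\mathbf{z}[k]$ one has $\mathbf{z}[k+1]=\bar{\mathbf{A}}\mathbf{z}[k]$, $\mathbf{y}_i[k]=\mathbf{C}_i\mathbf{T}\mathbf{z}[k]$, where $\mathbf{z}=[\mathbf{z}^{(1)T}\cdots\mathbf{z}^{(N)T}]^T$ with $\mathbf{z}^{(j)}\in\mathbb{R}^{n_j}$ ("substate $j$"), $\sum_j n_j=n$, $\bar{\mathbf{A}}=\mathbf{T}^{-1}\mathbf{A}\mathbf{T}$ is block lower triangular with blocks $\mathbf{A}_{jq}$ ($\mathbf{A}_{jq}=0$ for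 $q>j$), so $\mathbf{z}^{(j)}[k+1]=\mathbf{A}_{jj}\mathbf{z}^{(j)}[k]+\sum_{q=1}^{j-1}\mathbf{A}_{jq}\mathbf{z}^{(q)}[k]$; and $\mathbf{C}_i\mathbf{T}=[\mathbf{C}_{i1}\ \cdots\ \mathbf{C}_{ii}\ 0\ \cdots\ 0]$, so $\mathbf{y}_i[k]=\sum_{q=1}^{i}\mathbf{C}_{iq}\mathbf{z}^{(q)}[k]$; moreover each pair $(\mathbf{A}_{jj},\mathbf{C}_{jj})$ is observable. Node $j$ is called the source node of substate $j$. Freshness indices. For each substate $j$ and node $i$, node $i$ keeps $\tau^{(j)}_i[k]\in\{\omega\}\cup\mathbb{N}$, where $\omega$ is a special symbol. Initialization: $\tau^{(j)}_j[0]=0$, $\tau^{(j)}_i[0]=\omega$ for $i\neq j$. The source keeps $\tau^{(j)}_j[k]=0$ for all $k$. For $i\neq j$, let $\mathcal{M}^{(j)}_i[k]=\{l\in\mathcal{N}_i[k]:\tau^{(j)}_l[k]\neq\omega\}$. Case 1, $\tau^{(j)}_i[k]=\omega$: if $\mathcal{M}^{(j)}_i[k]\neq\emptyset$, let $u$ be any minimizer of $\tau^{(j)}_l[k]$ over $l\in\mathcal{M}^{(j)}_i[k]$, set $\tau^{(j)}_i[k+1]=\tau^{(j)}_u[k]+1$ and perform an "adopt-$u$" estimate update; otherwise set $\tau^{(j)}_i[k+1]=\omega$ and perform an "open-loop" estimate update. Case 2, $\tau^{(j)}_i[k]\neq\omega$: let $\mathcal{F}^{(j)}_i[k]=\{l\in\mathcal{M}^{(j)}_i[k]:\tau^{(j)}_l[k]<\tau^{(j)}_i[k]\}$;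 if nonempty, let $u$ be any minimizer of $\tau^{(j)}_l[k]$ over $\mathcal{F}^{(j)}_i[k]$, set $\tau^{(j)}_i[k+1]=\tau^{(j)}_u[k]+1$ and perform an adopt-$u$ update; otherwise set $\tau^{(j)}_i[k+1]=\tau^{(j)}_i[k]+1$ and perform an open-loop update. Estimates. Each node $i$ keeps $\hat{\mathbf{z}}_i[k]=[\hat{\mathbf{z}}^{(1)T}_i[k]\cdots\hat{\mathbf{z}}^{(N)T}_i[k]]^T$, with arbitrary initial value. Source update for substate $j$: $\hat{\mathbf{z}}^{(j)}_j[k+1]=(\mathbf{A}_{jj}-\mathbf{L}_j\mathbf{C}_{jj})\hat{\mathbf{z}}^{(j)}_j[k]+\sum_{q=1}^{j-1}(\mathbf{A}_{jq}-\mathbf{L}_j\mathbf{C}_{jq})\hat{\mathbf{z}}^{(q)}_j[k]+\mathbf{L}_j\mathbf{y}_j[k]$. Adopt-$u$ update at node $i\ne j$: $\hat{\mathbf{z}}^{(j)}_i[k+1]=\mathbf{A}_{jj}\hat{\mathbf{z}}^{(j)}_u[k]+\sum_{q=1}^{j-1}\mathbf{A}_{jq}\hat{\mathbf{z}}^{(q)}_i[k]$. Open-loop update at node $i\neq j$: $\hat{\mathbf{z}}^{(j)}_i[k+1]=\mathbf{A}_{jj}\hat{\mathbf{z}}^{(j)}_i[k]+\sum_{q=1}^{j-1}\mathbf{A}_{jq}\hat{\mathbf{z}}^{(q)}_i[k]$. These updates are carried out for every substate $j$ at every time $k$. *)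

theory Defs
  imports Main "Jordan_Normal_Form.Matrix"
begin

definition vnorm :: "real vec \<Rightarrow> real" where
  "vnorm v = sqrt (\<Sum>i<dim_vec v. (v $ i)^2)"

definition mat_opnorm :: "real mat \<Rightarrow> real" where
  "mat_opnorm M = Sup {vnorm (M *\<^sub>v v) | v. v \<in> carrier_vec (dim_col M) \<and> vnorm v \<le> 1}"

text \<open>Observability of the pair (A,C): the observability matrix
  [C; CA; ...; CA^(n-1)] has trivial kernel (full column rank).\<close>
definition observable :: "nat \<Rightarrow> real mat \<Rightarrow> real mat \<Rightarrow> bool" where
  "observable n A C \<longleftrightarrow> A \<in> carrier_mat n n \<and> dim_col C = n \<and>
     (\<forall>v \<in> carrier_vec n. (\<forall>k<n. C *\<^sub>v ((A ^\<^sub>m k) *\<^sub>v v) = 0\<^sub>v (dim_row C)) \<longrightarrow> v = 0\<^sub>v n)"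

definition off :: "(nat \<Rightarrow> nat) \<Rightarrow> nat \<Rightarrow> nat" where
  "off ns j = (\<Sum>q<j. ns q)"

text \<open>Stacked output matrix C = [C_0; C_1; ...; C_(N-1)] (C_i has r i rows, n columns).\<close>
fun stackC :: "(nat \<Rightarrow> nat) \<Rightarrow> (nat \<Rightarrow> real mat) \<Rightarrow> nat \<Rightarrow> nat \<Rightarrow> real mat" where
  "stackC r Cs 0 n = 0\<^sub>m 0 n"
| "stackC r Cs (Suc N) n = mat (off r (Suc N)) n
     (\<lambda>(a,b). if a < off r N then stackC r Cs N n $$ (a,b) else Cs N $$ (a - off r N, b))"

definition subv :: "(nat \<Rightarrow> nat) \<Rightarrow> real vec \<Rightarrow> nat \<Rightarrow> real vec" where
  "subv ns v j = vec (ns j) (\<lambda>a. v $ (off ns j + a))"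

definition blk :: "(nat \<Rightarrow> nat) \<Rightarrow> real mat \<Rightarrow> nat \<Rightarrow> nat \<Rightarrow> real mat" where
  "blk ns M j q = mat (ns j) (ns q) (\<lambda>(a,b). M $$ (off ns j + a, off ns q + b))"

text \<open>Column block q of a matrix (used for C_i T = [C_i0 ... C_i(N-1)]).\<close>
definition cblk :: "(nat \<Rightarrow> nat) \<Rightarrow> real mat \<Rightarrow> nat \<Rightarrow> real mat" where
  "cblk ns M q = mat (dim_row M) (ns q) (\<lambda>(a,b). M $$ (a, off ns q + b))"

definition coupling :: "(nat \<Rightarrow> nat) \<Rightarrow> real mat \<Rightarrow> real vec \<Rightarrow> nat \<Rightarrow> real vec" where
  "coupling ns Ab v j = finsum_vec TYPE(real) (ns j) (\<lambda>q. blk ns Ab j q *\<^sub>v subv ns v q) {..<j}"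

text \<open>Nodes are 0..N-1. E k is the edge set at time k; (l,i) \<in> E k means l can send to i.\<close>
definition nbrs :: "nat \<Rightarrow> (nat \<Rightarrow> (nat \<times> nat) set) \<Rightarrow> nat \<Rightarrow> nat \<Rightarrow> nat set" where
  "nbrs N E k i = {l. l < N \<and> l \<noteq> i \<and> (l, i) \<in> E k}"

definition strongly_connected :: "nat \<Rightarrow> (nat \<times> nat) set \<Rightarrow> bool" where
  "strongly_connected N R \<longleftrightarrow>
     (\<forall>a<N. \<forall>b<N. (a, b) \<in> (R \<inter> ({..<N} \<times> {..<N}))\<^sup>*)"

definition jointly_strongly_connected :: "nat \<Rightarrow> (nat \<Rightarrow> (nat \<times> nat) set) \<Rightarrow> nat \<Rightarrow> bool" where
  "jointly_strongly_connected N E T \<longleftrightarrow> T \<ge> 1 \<and>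
     (\<forall>k. strongly_connected N (\<Union>t \<in> {k*T..<(k+1)*T}. E t))"

section \<open>The freshness-index algorithm\<close>

text \<open>tau j i k : freshness index of node i for substate j at time k (None = omega).
  zh i k : estimate of node i at time k (a vector of dimension n in z-coordinates).
  Ab = T^{-1} A T, TC j = C_j * T, y j k = output of node j at time k, L j = gains.
  The minimizer u is any minimizer (all tie-breaking choices are allowed).\<close>

definition Mset :: "nat \<Rightarrow> (nat \<Rightarrow> (nat \<times> nat) set) \<Rightarrow> (nat \<Rightarrow> nat \<Rightarrow> nat \<Rightarrow> nat option)
                     \<Rightarrow> nat \<Rightarrow> nat \<Rightarrow> nat \<Rightarrow> nat set" where
  "Mset N E tau j i k = {l \<in> nbrs N E k i. tau j l k \<noteq> None}"

definition open_loop :: "(nat \<Rightarrow> nat) \<Rightarrow> real mat \<Rightarrow> (nat \<Rightarrow> nat \<Rightarrow> real vec) \<Rightarrow> nat \<Rightarrow> nat \<Rightarrow> nat \<Rightarrow> bool" where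
  "open_loop ns Ab zh j i k \<longleftrightarrow>
     subv ns (zh i (Suc k)) j = blk ns Ab j j *\<^sub>v subv ns (zh i k) j + coupling ns Ab (zh i k) j"

definition adopt :: "(nat \<Rightarrow> nat) \<Rightarrow> real mat \<Rightarrow> (nat \<Rightarrow> nat \<Rightarrow> real vec) \<Rightarrow> nat \<Rightarrow> nat \<Rightarrow> nat \<Rightarrow> nat \<Rightarrow> bool" where
  "adopt ns Ab zh j i u k \<longleftrightarrow>
     subv ns (zh i (Suc k)) j = blk ns Ab j j *\<^sub>v subv ns (zh u k) j + coupling ns Ab (zh i k) j"

definition adopt_min :: "nat \<Rightarrow> (nat \<Rightarrow> nat) \<Rightarrow> real mat \<Rightarrow> (nat \<Rightarrow> nat \<Rightarrow> nat \<Rightarrow> nat option)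
      \<Rightarrow> (nat \<Rightarrow> nat \<Rightarrow> real vec) \<Rightarrow> nat set \<Rightarrow> nat \<Rightarrow> nat \<Rightarrow> nat \<Rightarrow> bool" where
  "adopt_min N ns Ab tau zh S j i k \<longleftrightarrow>
     (\<exists>u \<in> S. (\<forall>l \<in> S. the (tau j u k) \<le> the (tau j l k)) \<and>
              tau j i (Suc k) = Some (the (tau j u k) + 1) \<and> adopt ns Ab zh j i u k)"

definition source_update :: "(nat \<Rightarrow> nat) \<Rightarrow> real mat \<Rightarrow> (nat \<Rightarrow> real mat) \<Rightarrow> (nat \<Rightarrow> real mat)
      \<Rightarrow> (nat \<Rightarrow> nat \<Rightarrow> real vec) \<Rightarrow> (nat \<Rightarrow> nat \<Rightarrow> real vec) \<Rightarrow> nat \<Rightarrow> nat \<Rightarrow> bool" where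
  "source_update ns Ab TC L y zh j k \<longleftrightarrow>
     subv ns (zh j (Suc k)) j =
       (blk ns Ab j j - L j * cblk ns (TC j) j) *\<^sub>v subv ns (zh j k) j
       + finsum_vec TYPE(real) (ns j)
           (\<lambda>q. (blk ns Ab j q - L j * cblk ns (TC j) q) *\<^sub>v subv ns (zh j k) q) {..<j}
       + L j *\<^sub>v y j k"

definition alg_run :: "nat \<Rightarrow> nat \<Rightarrow> (nat \<Rightarrow> (nat \<times> nat) set) \<Rightarrow> (nat \<Rightarrow> nat) \<Rightarrow> real mat
      \<Rightarrow> (nat \<Rightarrow> real mat) \<Rightarrow> (nat \<Rightarrow> real mat) \<Rightarrow> (nat \<Rightarrow> nat \<Rightarrow> real vec)
      \<Rightarrow> (nat \<Rightarrow> nat \<Rightarrow> nat \<Rightarrow> nat option) \<Rightarrow> (nat \<Rightarrow> nat \<Rightarrow> real vec) \<Rightarrow> bool" where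
  "alg_run N n E ns Ab TC L y tau zh \<longleftrightarrow>
     (\<forall>i<N. \<forall>k. zh i k \<in> carrier_vec n) \<and>
     (\<forall>j<N. \<forall>i<N. tau j i 0 = (if i = j then Some 0 else None)) \<and>
     (\<forall>j<N. \<forall>k. tau j j k = Some 0 \<and> source_update ns Ab TC L y zh j k) \<and>
     (\<forall>j<N. \<forall>i<N. \<forall>k. i \<noteq> j \<longrightarrow>
        (let M = Mset N E tau j i k in
         (case tau j i k of
            None \<Rightarrow>
              (if M \<noteq> {} then adopt_min N ns Ab tau zh M j i k
               else tau j i (Suc k) = None \<and> open_loop ns Ab zh j i k)
          | Some t \<Rightarrow>
              (let F = {l \<in> M. the (tau j l k) < t} in
               if F \<noteq> {} then adopt_min N ns Ab tau zh F j i k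
               else tau j i (Suc k) = Some (t + 1) \<and> open_loop ns Ab zh j i k))))"

end

theory Submission
  imports Defs "Jordan_Normal_Form.Determinant"
begin

lemma mv_idx: "M \<in> carrier_mat a b \<Longrightarrow> v \<in> carrier_vec b \<Longrightarrow> i < a \<Longrightarrow>
  (M *\<^sub>v v) $ i = (\<Sum>j<b. M $$ (i,j) * v $ j)"
  by (auto simp: scalar_prod_def row_def atLeast0LessThan)

lemma inv_of_ker:
  fixes M :: "real mat"
  assumes M: "M \<in> carrier_mat m m" and ker: "\<And>v. v \<in> carrier_vec m \<Longrightarrow> M *\<^sub>v v = 0\<^sub>v m \<Longrightarrow> v = 0\<^sub>v m"
  shows "\<exists>Mi. Mi \<in> carrier_mat m m \<and> M * Mi = 1\<^sub>m m \<and> Mi * M = 1\<^sub>m m"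
proof -
  have "det M \<noteq> 0" using det_0_iff_vec_prod_zero[OF M] ker by blast
  from det_non_zero_imp_unit[OF M this, of "()"] show ?thesis
    unfolding Units_def ring_mat_def by auto
qed

lemma ker_wide:
  fixes P :: "real mat"
  assumes P: "P \<in> carrier_mat k m" and km: "k < m"
  shows "\<exists>v. v \<in> carrier_vec m \<and> v \<noteq> 0\<^sub>v m \<and> P *\<^sub>v v = 0\<^sub>v k"
proof -
  define Q where "Q = mat m m (\<lambda>(i,c). if i < k then P $$ (i,c) else 0)"
  have Q: "Q \<in> carrier_mat m m" unfolding Q_def by auto
  have m1: "m - 1 < m" using km by auto
  have "Q = mat\<^sub>r m m (\<lambda>i. if i = m - 1 then 0\<^sub>v m else row Q i)"
    by (rule eq_matI, insert km, auto simp: Q_def)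
  also have "det \<dots> = 0" by (rule det_row_0[OF m1], auto simp: Q_def)
  finally have "det Q = 0" .
  then obtain v where v: "v \<in> carrier_vec m" "v \<noteq> 0\<^sub>v m" "Q *\<^sub>v v = 0\<^sub>v m"
    using det_0_iff_vec_prod_zero[OF Q] by blast
  have "P *\<^sub>v v = 0\<^sub>v k"
  proof (rule eq_vecI)
    fix i assume "i < dim_vec (0\<^sub>v k :: real vec)"
    hence i: "i < k" by auto
    have "(Q *\<^sub>v v) $ i = 0" using v(3) i km by auto
    moreover have "(Q *\<^sub>v v) $ i = (P *\<^sub>v v) $ i"
    proof -
      have "(Q *\<^sub>v v) $ i = (\<Sum>j<m. Q$$(i,j) * v$j)" by (rule mv_idx[OF Q v(1)]) (insert i km, auto)
      also have "\<dots> = (\<Sum>j<m. P$$(i,j) * v$j)" using i km by (simp add: Q_def)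
      also have "\<dots> = (P *\<^sub>v v) $ i" by (rule mv_idx[OF P v(1) i, symmetric])
      finally show ?thesis .
    qed
    ultimately show "(P *\<^sub>v v) $ i = 0\<^sub>v k $ i" using i by auto
  qed (insert P, auto)
  with v show ?thesis by auto
qed

lemma unit_scalar: "y \<in> carrier_vec p \<Longrightarrow> r < p \<Longrightarrow> unit_vec p r \<bullet> (y :: real vec) = y $ r"
proof -
  assume y: "y \<in> carrier_vec p" and r: "r < p"
  have "unit_vec p r \<bullet> y = (\<Sum>i\<in>{0..<p}. (if i = r then y $ i else 0))"
    using y unfolding scalar_prod_def unit_vec_def by (intro sum.cong) auto
  also have "\<dots> = y $ r" using r by simp
  finally show ?thesis .
qed

lemma pow_commute: "B \<in> carrier_mat n n \<Longrightarrow> B * B ^\<^sub>m t = B ^\<^sub>m t * (B :: real mat)"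
proof (induction t)
  case 0 then show ?case by auto
next
  case (Suc t)
  have "B * B ^\<^sub>m Suc t = (B * B ^\<^sub>m t) * B"
    using Suc.prems assoc_mult_mat[of B n n "B ^\<^sub>m t" n B n] by simp
  also have "\<dots> = B ^\<^sub>m Suc t * B" using Suc by simp
  finally show ?case .
qed

lemma transpose_pow: "B \<in> carrier_mat n n \<Longrightarrow> transpose_mat (B ^\<^sub>m t) = (transpose_mat B) ^\<^sub>m t" for B :: "real mat"
proof (induction t)
  case 0 then show ?case by auto
next
  case (Suc t)
  have "transpose_mat (B ^\<^sub>m Suc t) = transpose_mat B * transpose_mat (B ^\<^sub>m t)"
    using Suc.prems transpose_mult[of "B ^\<^sub>m t" n n B n] by simp
  also have "\<dots> = transpose_mat B * (transpose_mat B) ^\<^sub>m t" using Suc by simp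
  also have "\<dots> = (transpose_mat B) ^\<^sub>m t * transpose_mat B"
    by (rule pow_commute) (use Suc.prems in auto)
  finally show ?case by simp
qed

definition lc :: "nat \<Rightarrow> nat \<Rightarrow> (nat \<Rightarrow> real vec) \<Rightarrow> (nat \<Rightarrow> real) \<Rightarrow> real vec" where
  "lc m k phi w = vec m (\<lambda>c. \<Sum>i<k. w i * phi i $ c)"

lemma lc_carrier[simp]: "lc m k phi w \<in> carrier_vec m" by (simp add: lc_def)
lemma lc_dim[simp]: "dim_vec (lc m k phi w) = m" by (simp add: lc_def)

lemma lc_add: "lc m k phi w1 + lc m k phi w2 = lc m k phi (\<lambda>i. w1 i + w2 i)"
  by (rule eq_vecI, auto simp: lc_def algebra_simps sum.distrib)

lemma lc_minus: "lc m k phi w1 - lc m k phi w2 = lc m k phi (\<lambda>i. w1 i - w2 i)"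
  by (rule eq_vecI, auto simp: lc_def algebra_simps sum_subtractf)

lemma lc_smult: "a \<cdot>\<^sub>v lc m k phi w = lc m k phi (\<lambda>i. a * w i)"
  by (rule eq_vecI, auto simp: lc_def algebra_simps sum_distrib_left)

lemma lc_unit: "phi i \<in> carrier_vec m \<Longrightarrow> i < k \<Longrightarrow> phi i = lc m k phi (\<lambda>j. if j = i then 1 else 0)"
proof (rule eq_vecI)
  fix a assume "phi i \<in> carrier_vec m" "i < k" "a < dim_vec (lc m k phi (\<lambda>j. if j = i then 1 else 0))"
  moreover have "(\<Sum>j<k. (if j = i then 1 else 0) * phi j $ a) = (\<Sum>j<k. (if j = i then phi j $ a else 0))"
    by (rule sum.cong, auto)
  ultimately show "phi i $ a = lc m k phi (\<lambda>j. if j = i then 1 else 0) $ a" by (simp add: lc_def)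
qed auto

lemma lc_Suc: "lc m (Suc k) phi w = lc m k phi w + w k \<cdot>\<^sub>v (vec m (\<lambda>c. phi k $ c))"
  by (rule eq_vecI, auto simp: lc_def)

lemma lc_cong: "(\<And>i. i < k \<Longrightarrow> phi i = psi i) \<Longrightarrow> lc m k phi w = lc m k psi w"
  by (auto simp: lc_def)

lemma mat_lc:
  assumes M: "M \<in> carrier_mat m m" and phi: "\<And>i. i < k \<Longrightarrow> phi i \<in> carrier_vec m"
    and W: "\<And>i. i < k \<Longrightarrow> M *\<^sub>v phi i = lc m k phi (W i)"
  shows "M *\<^sub>v lc m k phi w = lc m k phi (\<lambda>j. \<Sum>i<k. w i * W i j)"
proof (rule eq_vecI)
  fix a assume "a < dim_vec (lc m k phi (\<lambda>j. \<Sum>i<k. w i * W i j))"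
  hence a: "a < m" by simp
  have "(M *\<^sub>v lc m k phi w) $ a = (\<Sum>c<m. M $$ (a,c) * (\<Sum>i<k. w i * phi i $ c))"
    by (subst mv_idx[OF M lc_carrier a]) (simp add: lc_def)
  also have "\<dots> = (\<Sum>i<k. w i * (\<Sum>c<m. M $$ (a,c) * phi i $ c))"
    by (simp add: sum_distrib_left algebra_simps, subst sum.swap, simp)
  also have "\<dots> = (\<Sum>i<k. w i * (M *\<^sub>v phi i) $ a)"
    by (rule sum.cong, simp, subst mv_idx[OF M phi a], auto)
  also have "\<dots> = (\<Sum>i<k. w i * (\<Sum>j<k. W i j * phi j $ a))"
    by (rule sum.cong, simp, subst W, auto simp: lc_def a)
  also have "\<dots> = (\<Sum>j<k. (\<Sum>i<k. w i * W i j) * phi j $ a)"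
    by (simp add: sum_distrib_left sum_distrib_right algebra_simps, subst sum.swap, simp)
  finally show "(M *\<^sub>v lc m k phi w) $ a = lc m k phi (\<lambda>j. \<Sum>i<k. w i * W i j) $ a"
    using a by (simp add: lc_def)
qed (use M in auto)

lemma lc_orth:
  assumes v: "v \<in> carrier_vec m" and orth: "\<And>i. i < k \<Longrightarrow> phi i \<bullet> v = 0"
    and phi: "\<And>i. i < k \<Longrightarrow> phi i \<in> carrier_vec m"
  shows "lc m k phi w \<bullet> v = 0"
proof -
  have "lc m k phi w \<bullet> v = (\<Sum>c<m. (\<Sum>i<k. w i * phi i $ c) * v $ c)"
    using v by (simp add: scalar_prod_def lc_def atLeast0LessThan)
  also have "\<dots> = (\<Sum>i<k. w i * (phi i \<bullet> v))"
    using v phi by (simp add: scalar_prod_def atLeast0LessThan sum_distrib_left sum_distrib_right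
        algebra_simps, subst sum.swap, simp)
  also have "\<dots> = 0" using orth by simp
  finally show ?thesis .
qed

lemma chain_step_exists:
  fixes A C :: "real mat"
  assumes A: "A \<in> carrier_mat m m" and C: "C \<in> carrier_mat p m"
    and obs: "\<And>v. v \<in> carrier_vec m \<Longrightarrow> (\<And>t. t < m \<Longrightarrow> C *\<^sub>v (A ^\<^sub>m t *\<^sub>v v) = 0\<^sub>v p) \<Longrightarrow> v = 0\<^sub>v m"
    and km: "k < m"
    and phi: "\<And>i. phi i \<in> carrier_vec m" and g: "\<And>i. g i \<in> carrier_vec p"
    and rec: "\<And>i. Suc i < k \<Longrightarrow> phi (Suc i) = transpose_mat A *\<^sub>v phi i + transpose_mat C *\<^sub>v g (Suc i)"
    and b: "b = (if k = 0 then 0\<^sub>v m else transpose_mat A *\<^sub>v phi (k - 1))"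
  shows "\<exists>gn. gn \<in> carrier_vec p \<and> (\<forall>w. b + transpose_mat C *\<^sub>v gn \<noteq> lc m k phi w)"
proof (rule ccontr)
  assume "\<not> ?thesis"
  hence H: "\<And>gn. gn \<in> carrier_vec p \<Longrightarrow> \<exists>w. b + transpose_mat C *\<^sub>v gn = lc m k phi w" by blast
  have bc: "b \<in> carrier_vec m" using b A phi by auto
  have CT0: "transpose_mat C *\<^sub>v 0\<^sub>v p = 0\<^sub>v m"
    using C by (intro eq_vecI) (auto simp: scalar_prod_def)
  obtain w0 where w0: "b = lc m k phi w0" using H[of "0\<^sub>v p"] bc C CT0 by auto
  have CT: "\<exists>w. transpose_mat C *\<^sub>v gn = lc m k phi w" if gn: "gn \<in> carrier_vec p" for gn
  proof -
    obtain w1 where w1: "b + transpose_mat C *\<^sub>v gn = lc m k phi w1" using H[OF gn] by blast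
    have "transpose_mat C *\<^sub>v gn = (b + transpose_mat C *\<^sub>v gn) - b" using bc C gn by auto
    also have "\<dots> = lc m k phi (\<lambda>i. w1 i - w0 i)" unfolding w1 by (simp only: w0 lc_minus)
    finally show ?thesis by blast
  qed
  have AT: "\<exists>W. transpose_mat A *\<^sub>v phi i = lc m k phi W" if i: "i < k" for i
  proof (cases "Suc i < k")
    case True
    obtain w1 where w1: "transpose_mat C *\<^sub>v g (Suc i) = lc m k phi w1" using CT[OF g] by blast
    have "transpose_mat A *\<^sub>v phi i = phi (Suc i) - transpose_mat C *\<^sub>v g (Suc i)"
      using rec[OF True] A C phi g by auto
    also have "\<dots> = lc m k phi (\<lambda>j. (if j = Suc i then 1 else 0) - w1 j)"
      unfolding w1 by (subst lc_unit[OF phi True], rule lc_minus)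
    finally show ?thesis by blast
  next
    case False
    with i have "i = k - 1" "k \<noteq> 0" by auto
    thus ?thesis using w0 b by auto
  qed
  then obtain W where W: "\<And>i. i < k \<Longrightarrow> transpose_mat A *\<^sub>v phi i = lc m k phi (W i)" by metis
  have ATlc: "\<exists>w'. transpose_mat A *\<^sub>v lc m k phi w = lc m k phi w'" for w
    using mat_lc[of "transpose_mat A" m k phi W w] A phi W by auto
  define Phi where "Phi = mat k m (\<lambda>(i,c). phi i $ c)"
  have Phi: "Phi \<in> carrier_mat k m" unfolding Phi_def by auto
  obtain v where v: "v \<in> carrier_vec m" "v \<noteq> 0\<^sub>v m" "Phi *\<^sub>v v = 0\<^sub>v k"
    using ker_wide[OF Phi km] by blast
  have orth: "phi i \<bullet> v = 0" if i: "i < k" for i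
  proof -
    have "(Phi *\<^sub>v v) $ i = 0" using v i by auto
    moreover have "(Phi *\<^sub>v v) $ i = phi i \<bullet> v"
    proof -
      have "(Phi *\<^sub>v v) $ i = (\<Sum>c<m. Phi $$ (i,c) * v $ c)" by (rule mv_idx[OF Phi v(1) i])
      also have "\<dots> = phi i \<bullet> v" using i v(1) by (simp add: Phi_def scalar_prod_def atLeast0LessThan)
      finally show ?thesis .
    qed
    ultimately show ?thesis by simp
  qed
  have span: "\<exists>w. (transpose_mat A ^\<^sub>m t) *\<^sub>v (transpose_mat C *\<^sub>v unit_vec p r) = lc m k phi w"
    if r: "r < p" for r t
  proof (induction t)
    case 0
    then show ?case using CT[of "unit_vec p r"] r C A by auto
  next
    case (Suc t)
    then obtain w where w: "(transpose_mat A ^\<^sub>m t) *\<^sub>v (transpose_mat C *\<^sub>v unit_vec p r) = lc m k phi w" by blast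
    have "(transpose_mat A ^\<^sub>m Suc t) *\<^sub>v (transpose_mat C *\<^sub>v unit_vec p r)
      = transpose_mat A *\<^sub>v ((transpose_mat A ^\<^sub>m t) *\<^sub>v (transpose_mat C *\<^sub>v unit_vec p r))"
    proof -
      have "transpose_mat A ^\<^sub>m Suc t = transpose_mat A * transpose_mat A ^\<^sub>m t"
        using pow_commute[of "transpose_mat A" m t] A by simp
      thus ?thesis using A C
        by (simp add: assoc_mult_mat_vec[of _ m m _ m])
    qed
    then show ?case using w ATlc by metis
  qed
  have "v = 0\<^sub>v m"
  proof (rule obs[OF v(1)])
    fix t assume t: "t < m"
    show "C *\<^sub>v (A ^\<^sub>m t *\<^sub>v v) = 0\<^sub>v p"
    proof (rule eq_vecI)
      fix r assume "r < dim_vec (0\<^sub>v p :: real vec)"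
      hence r: "r < p" by simp
      have Atv: "A ^\<^sub>m t *\<^sub>v v \<in> carrier_vec m" by (rule mult_mat_vec_carrier[OF pow_carrier_mat[OF A] v(1)])
      have "(C *\<^sub>v (A ^\<^sub>m t *\<^sub>v v)) $ r = unit_vec p r \<bullet> (C *\<^sub>v (A ^\<^sub>m t *\<^sub>v v))"
        using r C Atv by (simp add: unit_scalar)
      also have "\<dots> = (transpose_mat C *\<^sub>v unit_vec p r) \<bullet> (A ^\<^sub>m t *\<^sub>v v)"
        by (rule transpose_vec_mult_scalar[symmetric, OF C Atv], use r in auto)
      also have "\<dots> = (transpose_mat (A ^\<^sub>m t) *\<^sub>v (transpose_mat C *\<^sub>v unit_vec p r)) \<bullet> v"
        by (rule transpose_vec_mult_scalar[symmetric, of _ m m], use A v C r in auto)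
      also have "\<dots> = 0"
        using span[OF r, of t] lc_orth[OF v(1) orth phi] transpose_pow[OF A] by auto
      finally show "(C *\<^sub>v (A ^\<^sub>m t *\<^sub>v v)) $ r = 0\<^sub>v p $ r" using r by simp
    qed (use C in auto)
  qed
  with v(2) show False by simp
qed

lemma chain:
  fixes A C :: "real mat"
  assumes A: "A \<in> carrier_mat m m" and C: "C \<in> carrier_mat p m"
    and obs: "\<And>v. v \<in> carrier_vec m \<Longrightarrow> (\<And>t. t < m \<Longrightarrow> C *\<^sub>v (A ^\<^sub>m t *\<^sub>v v) = 0\<^sub>v p) \<Longrightarrow> v = 0\<^sub>v m"
  shows "k \<le> m \<Longrightarrow> \<exists>phi g. (\<forall>i. phi i \<in> carrier_vec m) \<and> (\<forall>i. g i \<in> carrier_vec p) \<and>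
    phi 0 = transpose_mat C *\<^sub>v g 0 \<and>
    (\<forall>i. Suc i < k \<longrightarrow> phi (Suc i) = transpose_mat A *\<^sub>v phi i + transpose_mat C *\<^sub>v g (Suc i)) \<and>
    (\<forall>w. lc m k phi w = 0\<^sub>v m \<longrightarrow> (\<forall>i<k. w i = 0))"
proof (induction k)
  case 0
  show ?case
    by (rule exI[of _ "\<lambda>_. 0\<^sub>v m"], rule exI[of _ "\<lambda>_. 0\<^sub>v p"], use C in auto)
next
  case (Suc k)
  then obtain phi g where phi: "\<And>i. phi i \<in> carrier_vec m" and g: "\<And>i. g i \<in> carrier_vec p"
    and p0: "phi 0 = transpose_mat C *\<^sub>v g 0"
    and rec: "\<And>i. Suc i < k \<Longrightarrow> phi (Suc i) = transpose_mat A *\<^sub>v phi i + transpose_mat C *\<^sub>v g (Suc i)"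
    and ind: "\<And>w. lc m k phi w = 0\<^sub>v m \<Longrightarrow> (\<forall>i<k. w i = 0)" by auto
  define b where "b = (if k = 0 then 0\<^sub>v m else transpose_mat A *\<^sub>v phi (k - 1))"
  have bc: "b \<in> carrier_vec m" using b_def A phi by auto
  obtain gn where gn: "gn \<in> carrier_vec p" and ns: "\<And>w. b + transpose_mat C *\<^sub>v gn \<noteq> lc m k phi w"
    using chain_step_exists[OF A C obs, of k phi g b] Suc.prems phi g rec b_def by auto
  define nv where "nv = b + transpose_mat C *\<^sub>v gn"
  have nv: "nv \<in> carrier_vec m" using bc gn C by (auto simp: nv_def)
  define phi' where "phi' = phi(k := nv)"
  define g' where "g' = g(k := gn)"
  have phi': "\<And>i. phi' i \<in> carrier_vec m" using phi nv by (auto simp: phi'_def)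
  have g': "\<And>i. g' i \<in> carrier_vec p" using g gn by (auto simp: g'_def)
  have p0': "phi' 0 = transpose_mat C *\<^sub>v g' 0"
  proof (cases "k = 0")
    case True
    then show ?thesis using gn C by (auto simp: phi'_def g'_def nv_def b_def)
  next
    case False
    then show ?thesis using p0 by (auto simp: phi'_def g'_def)
  qed
  have rec': "phi' (Suc i) = transpose_mat A *\<^sub>v phi' i + transpose_mat C *\<^sub>v g' (Suc i)"
    if i: "Suc i < Suc k" for i
  proof (cases "Suc i < k")
    case True
    then show ?thesis using rec[OF True] by (auto simp: phi'_def g'_def)
  next
    case False
    with i have "Suc i = k" by auto
    then show ?thesis by (auto simp: phi'_def g'_def nv_def b_def)
  qed
  have ind': "\<forall>i<Suc k. w i = 0" if w: "lc m (Suc k) phi' w = 0\<^sub>v m" for w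
  proof -
    have lcs: "lc m (Suc k) phi' w = lc m k phi w + w k \<cdot>\<^sub>v nv"
    proof -
      have "lc m (Suc k) phi' w = lc m k phi' w + w k \<cdot>\<^sub>v (vec m (\<lambda>c. phi' k $ c))" by (rule lc_Suc)
      also have "lc m k phi' w = lc m k phi w" by (rule lc_cong, auto simp: phi'_def)
      also have "vec m (\<lambda>c. phi' k $ c) = nv" using nv by (auto simp: phi'_def)
      finally show ?thesis .
    qed
    have wk: "w k = 0"
    proof (rule ccontr)
      assume wk: "w k \<noteq> 0"
      have "nv = (- 1 / w k) \<cdot>\<^sub>v lc m k phi w"
      proof -
        have eq: "lc m k phi w + w k \<cdot>\<^sub>v nv = 0\<^sub>v m" using w lcs by simp
        show ?thesis
        proof (rule eq_vecI)
          fix a assume "a < dim_vec ((- 1 / w k) \<cdot>\<^sub>v lc m k phi w)"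
          hence a: "a < m" by simp
          from arg_cong[OF eq, of "\<lambda>x. x $ a"] have "lc m k phi w $ a + w k * nv $ a = 0"
            using a nv by simp
          thus "nv $ a = ((- 1 / w k) \<cdot>\<^sub>v lc m k phi w) $ a" using a wk
            by (simp add: field_simps)
        qed (use nv in auto)
      qed
      hence "nv = lc m k phi (\<lambda>i. (- 1 / w k) * w i)" by (simp add: lc_smult)
      thus False using ns[of "\<lambda>i. (- 1 / w k) * w i"] unfolding nv_def by simp
    qed
    have "lc m k phi w = lc m k phi w + w k \<cdot>\<^sub>v nv" by (rule eq_vecI) (use nv wk in auto)
    hence "lc m k phi w = 0\<^sub>v m" using w lcs by simp
    from ind[OF this] wk show ?thesis using less_Suc_eq by auto
  qed
  show ?case
    by (rule exI[of _ phi'], rule exI[of _ g'], use phi' g' p0' rec' ind' in blast)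
qed

lemma pow_vec_carrier[simp]: "B \<in> carrier_mat n n \<Longrightarrow> v \<in> carrier_vec n \<Longrightarrow> B ^\<^sub>m j *\<^sub>v v \<in> carrier_vec n"
  by (rule mult_mat_vec_carrier[OF pow_carrier_mat])

lemma mat_vec_zero[simp]: "M \<in> carrier_mat a b \<Longrightarrow> M *\<^sub>v 0\<^sub>v b = (0\<^sub>v a :: real vec)"
  by (intro eq_vecI) (auto simp: scalar_prod_def)

lemma mat_vec_via_lc:
  assumes phi: "\<And>i. phi i \<in> carrier_vec m" and w: "w \<in> carrier_vec m"
  shows "mat m m (\<lambda>(c,i). phi i $ c) *\<^sub>v w = lc m m phi (\<lambda>i. w $ i)"
proof (rule eq_vecI)
  fix a assume "a < dim_vec (lc m m phi (\<lambda>i. w $ i))"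
  hence a: "a < m" by simp
  have "(mat m m (\<lambda>(c,i). phi i $ c) *\<^sub>v w) $ a = (\<Sum>i<m. mat m m (\<lambda>(c,i). phi i $ c) $$ (a,i) * w $ i)"
    by (rule mv_idx[OF _ w a], auto)
  also have "\<dots> = (\<Sum>i<m. w $ i * phi i $ a)" using a by (auto intro: sum.cong)
  finally show "(mat m m (\<lambda>(c,i). phi i $ c) *\<^sub>v w) $ a = lc m m phi (\<lambda>i. w $ i) $ a"
    using a by (simp add: lc_def)
qed auto

lemma mat_unit_col:
  assumes M: "(M :: real mat) \<in> carrier_mat a b" and i: "i < b"
  shows "M *\<^sub>v unit_vec b i = vec a (\<lambda>r. M $$ (r, i))"
proof (rule eq_vecI)
  fix r assume "r < dim_vec (vec a (\<lambda>r. M $$ (r, i)))"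
  hence r: "r < a" by simp
  have "(M *\<^sub>v unit_vec b i) $ r = (\<Sum>j<b. M $$ (r,j) * unit_vec b i $ j)"
    by (rule mv_idx[OF M _ r], auto)
  also have "\<dots> = (\<Sum>j<b. if j = i then M $$ (r,j) else 0)" by (rule sum.cong, auto simp: unit_vec_def)
  also have "\<dots> = M $$ (r,i)" using i by simp
  finally show "(M *\<^sub>v unit_vec b i) $ r = vec a (\<lambda>r. M $$ (r, i)) $ r" using r by simp
qed (use M in auto)

lemma deadbeat:
  fixes A C :: "real mat"
  assumes A: "A \<in> carrier_mat m m" and C: "C \<in> carrier_mat p m" and obs: "observable m A C"
  shows "\<exists>L. L \<in> carrier_mat m p \<and> (A - L * C) ^\<^sub>m m = 0\<^sub>m m m"
proof (cases "m = 0")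
  case True
  show ?thesis by (rule exI[of _ "0\<^sub>m m p"], use True A C in auto)
next
  case False
  hence m0: "0 < m" by simp
  have obs': "v = 0\<^sub>v m" if "v \<in> carrier_vec m" "\<And>t. t < m \<Longrightarrow> C *\<^sub>v (A ^\<^sub>m t *\<^sub>v v) = 0\<^sub>v p" for v
    using obs that C unfolding observable_def by auto
  obtain phi g where phi: "\<And>i. phi i \<in> carrier_vec m" and g: "\<And>i. g i \<in> carrier_vec p"
    and p0: "phi 0 = transpose_mat C *\<^sub>v g 0"
    and rec: "\<And>i. Suc i < m \<Longrightarrow> phi (Suc i) = transpose_mat A *\<^sub>v phi i + transpose_mat C *\<^sub>v g (Suc i)"
    and ind: "\<And>w. lc m m phi w = 0\<^sub>v m \<Longrightarrow> (\<forall>i<m. w i = 0)"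
    using chain[OF A C obs', of m] by auto
  define P where "P = mat m m (\<lambda>(c,i). phi i $ c)"
  have P: "P \<in> carrier_mat m m" unfolding P_def by auto
  have Pker: "w = 0\<^sub>v m" if w: "w \<in> carrier_vec m" "P *\<^sub>v w = 0\<^sub>v m" for w
  proof -
    have "lc m m phi (\<lambda>i. w $ i) = 0\<^sub>v m" using w mat_vec_via_lc[OF phi w(1)] P_def by simp
    from ind[OF this] show ?thesis using w by (intro eq_vecI) auto
  qed
  obtain Pinv where Pinv: "Pinv \<in> carrier_mat m m" "P * Pinv = 1\<^sub>m m" "Pinv * P = 1\<^sub>m m"
    using inv_of_ker[OF P Pker] by blast
  have Pe: "P *\<^sub>v unit_vec m i = phi i" if i: "i < m" for i
    using mat_unit_col[OF P i] phi[of i] i by (intro eq_vecI) (auto simp: P_def)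
  have Pinv_phi: "Pinv *\<^sub>v phi i = unit_vec m i" if i: "i < m" for i
  proof -
    have "Pinv *\<^sub>v phi i = Pinv *\<^sub>v (P *\<^sub>v unit_vec m i)" using Pe[OF i] by simp
    also have "\<dots> = (Pinv * P) *\<^sub>v unit_vec m i" using Pinv P assoc_mult_mat_vec[of Pinv m m P m "unit_vec m i"] by simp
    finally show ?thesis using Pinv by simp
  qed
  define G where "G = mat p m (\<lambda>(r,i). if Suc i < m then - (g (Suc i) $ r) else 0)"
  have G: "G \<in> carrier_mat p m" unfolding G_def by auto
  define K0 where "K0 = G * Pinv"
  have K0: "K0 \<in> carrier_mat p m" using G Pinv unfolding K0_def by auto
  define L0 where "L0 = transpose_mat K0"
  have L0: "L0 \<in> carrier_mat m p" using K0 unfolding L0_def by auto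
  define A0 where "A0 = A - L0 * C"
  have A0: "A0 \<in> carrier_mat m m" using A L0 C unfolding A0_def by auto
  have A0T: "transpose_mat A0 = transpose_mat A - transpose_mat C * K0"
    unfolding A0_def L0_def
    using A C K0 by (simp add: transpose_minus[of _ m m] transpose_mult[of _ m p _ m])
  have A0T_phi: "transpose_mat A0 *\<^sub>v phi i = phi (Suc i)" if i: "Suc i < m" for i
  proof -
    have i': "i < m" using i by simp
    have "K0 *\<^sub>v phi i = G *\<^sub>v unit_vec m i"
      unfolding K0_def using G Pinv phi Pinv_phi[OF i'] by (simp add: assoc_mult_mat_vec[of _ p m _ m])
    also have "\<dots> = - g (Suc i)"
      using mat_unit_col[OF G i'] g[of "Suc i"] i by (intro eq_vecI) (auto simp: G_def)
    finally have K0phi: "K0 *\<^sub>v phi i = - g (Suc i)" .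
    have "transpose_mat A0 *\<^sub>v phi i = transpose_mat A *\<^sub>v phi i - (transpose_mat C * K0) *\<^sub>v phi i"
      unfolding A0T using A C K0 phi by (simp add: minus_mult_distrib_mat_vec[of _ m m])
    also have "(transpose_mat C * K0) *\<^sub>v phi i = transpose_mat C *\<^sub>v (- g (Suc i))"
      using C K0 phi K0phi by (simp add: assoc_mult_mat_vec[of _ m p _ m])
    also have "transpose_mat A *\<^sub>v phi i - transpose_mat C *\<^sub>v (- g (Suc i)) = phi (Suc i)"
    proof (rule eq_vecI)
      fix a assume "a < dim_vec (phi (Suc i))"
      hence a: "a < m" using phi[of "Suc i"] by simp
      have "(transpose_mat C *\<^sub>v (- g (Suc i))) $ a = - (transpose_mat C *\<^sub>v g (Suc i)) $ a"
        using a C g[of "Suc i"] by simp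
      then show "(transpose_mat A *\<^sub>v phi i - transpose_mat C *\<^sub>v - g (Suc i)) $ a = phi (Suc i) $ a"
        using rec[OF i] a A C by simp
    qed (use A C phi[of "Suc i"] in auto)
    finally show ?thesis .
  qed
  define q where "q = transpose_mat Pinv *\<^sub>v unit_vec m (m - 1)"
  have q: "q \<in> carrier_vec m" using Pinv unfolding q_def by auto
  have phiq: "phi i \<bullet> q = (if i = m - 1 then 1 else 0)" if i: "i < m" for i
  proof -
    have "phi i \<bullet> q = q \<bullet> phi i" using q phi by (simp add: comm_scalar_prod[of _ m])
    also have "\<dots> = unit_vec m (m - 1) \<bullet> (Pinv *\<^sub>v phi i)"
      unfolding q_def by (rule transpose_vec_mult_scalar[OF Pinv(1) phi], use m0 in auto)
    also have "\<dots> = (if i = m - 1 then 1 else 0)" unfolding Pinv_phi[OF i]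
      using i m0 by (simp add: unit_scalar)
    finally show ?thesis .
  qed
  define c0 where "c0 = phi 0"
  define D where "D = (\<lambda>n. c0 \<bullet> (A0 ^\<^sub>m n *\<^sub>v q))"
  have phiA0: "phi i \<bullet> (A0 ^\<^sub>m j *\<^sub>v q) = D (i + j)" if "i < m" for i j
    using that
  proof (induction i arbitrary: j)
    case 0 then show ?case by (simp add: D_def c0_def)
  next
    case (Suc i)
    have "phi (Suc i) \<bullet> (A0 ^\<^sub>m j *\<^sub>v q) = (transpose_mat A0 *\<^sub>v phi i) \<bullet> (A0 ^\<^sub>m j *\<^sub>v q)"
      using A0T_phi[OF Suc.prems] by simp
    also have "\<dots> = phi i \<bullet> (A0 *\<^sub>v (A0 ^\<^sub>m j *\<^sub>v q))"
      by (rule transpose_vec_mult_scalar[OF A0], use A0 q phi in auto)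
    also have "A0 *\<^sub>v (A0 ^\<^sub>m j *\<^sub>v q) = A0 ^\<^sub>m Suc j *\<^sub>v q"
    proof -
      have "A0 ^\<^sub>m Suc j = A0 * A0 ^\<^sub>m j" using pow_commute[OF A0, of j] by simp
      thus ?thesis using A0 q by (simp add: assoc_mult_mat_vec[of _ m m _ m])
    qed
    also have "phi i \<bullet> (A0 ^\<^sub>m Suc j *\<^sub>v q) = D (i + Suc j)" using Suc.IH[of "Suc j"] Suc.prems by simp
    finally show ?case by simp
  qed
  have Dsmall: "D n = (if n = m - 1 then 1 else 0)" if n: "n < m" for n
  proof -
    have "D n = phi n \<bullet> (A0 ^\<^sub>m 0 *\<^sub>v q)" using phiA0[OF n, of 0] by simp
    also have "A0 ^\<^sub>m 0 *\<^sub>v q = q" using A0 q by simp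
    finally show ?thesis using phiq[OF n] by simp
  qed
  define ell where "ell = A0 ^\<^sub>m m *\<^sub>v q"
  have ell: "ell \<in> carrier_vec m" using A0 q unfolding ell_def by auto
  define Ml where "Ml = mat m p (\<lambda>(a,r). ell $ a * g 0 $ r)"
  have Ml: "Ml \<in> carrier_mat m p" unfolding Ml_def by auto
  define L where "L = L0 + Ml"
  have L: "L \<in> carrier_mat m p" using L0 Ml unfolding L_def by auto
  define F where "F = A - L * C"
  have F: "F \<in> carrier_mat m m" using A L C unfolding F_def by auto
  have Fu: "F *\<^sub>v u = A0 *\<^sub>v u - (c0 \<bullet> u) \<cdot>\<^sub>v ell" if u: "u \<in> carrier_vec m" for u
  proof -
    have Cu: "C *\<^sub>v u \<in> carrier_vec p" using C u by auto
    have Mlv: "Ml *\<^sub>v (C *\<^sub>v u) = (c0 \<bullet> u) \<cdot>\<^sub>v ell"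
    proof (rule eq_vecI)
      fix a assume "a < dim_vec ((c0 \<bullet> u) \<cdot>\<^sub>v ell)"
      hence a: "a < m" using ell by simp
      have "(Ml *\<^sub>v (C *\<^sub>v u)) $ a = (\<Sum>r<p. Ml $$ (a,r) * (C *\<^sub>v u) $ r)" by (rule mv_idx[OF Ml Cu a])
      also have "\<dots> = ell $ a * (\<Sum>r<p. g 0 $ r * (C *\<^sub>v u) $ r)"
        using a by (simp add: Ml_def sum_distrib_left algebra_simps)
      also have "(\<Sum>r<p. g 0 $ r * (C *\<^sub>v u) $ r) = g 0 \<bullet> (C *\<^sub>v u)"
        by (simp only: scalar_prod_def carrier_vecD[OF Cu] atLeast0LessThan)
      also have "\<dots> = c0 \<bullet> u" unfolding c0_def p0
        by (rule transpose_vec_mult_scalar[OF C u g, symmetric])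
      finally show "(Ml *\<^sub>v (C *\<^sub>v u)) $ a = ((c0 \<bullet> u) \<cdot>\<^sub>v ell) $ a" using a ell by simp
    qed (use Ml ell in auto)
    have "F *\<^sub>v u = A *\<^sub>v u - L *\<^sub>v (C *\<^sub>v u)"
      unfolding F_def using A L C u by (simp add: minus_mult_distrib_mat_vec[of _ m m] assoc_mult_mat_vec[of _ m p _ m])
    also have "L *\<^sub>v (C *\<^sub>v u) = L0 *\<^sub>v (C *\<^sub>v u) + Ml *\<^sub>v (C *\<^sub>v u)"
      unfolding L_def using L0 Ml Cu by (simp add: add_mult_distrib_mat_vec[of _ m p])
    also have "A0 *\<^sub>v u = A *\<^sub>v u - L0 *\<^sub>v (C *\<^sub>v u)"
      unfolding A0_def using A L0 C u by (simp add: minus_mult_distrib_mat_vec[of _ m m] assoc_mult_mat_vec[of _ m p _ m])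
    ultimately show ?thesis unfolding Mlv
      using A u L0 Cu ell by (intro eq_vecI) auto
  qed
  have Fkill: "F ^\<^sub>m t *\<^sub>v (A0 ^\<^sub>m j *\<^sub>v q) = 0\<^sub>v m" if "j < m" "m \<le> t + j" for t j
    using that
  proof (induction t arbitrary: j)
    case 0 then show ?case by simp
  next
    case (Suc t)
    have vj: "A0 ^\<^sub>m j *\<^sub>v q \<in> carrier_vec m" using A0 q by auto
    have "F ^\<^sub>m Suc t *\<^sub>v (A0 ^\<^sub>m j *\<^sub>v q) = F ^\<^sub>m t *\<^sub>v (F *\<^sub>v (A0 ^\<^sub>m j *\<^sub>v q))"
      using F vj by (simp add: assoc_mult_mat_vec[of _ m m _ m])
    also have "F *\<^sub>v (A0 ^\<^sub>m j *\<^sub>v q) = A0 ^\<^sub>m Suc j *\<^sub>v q - D j \<cdot>\<^sub>v ell"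
    proof -
      have "A0 *\<^sub>v (A0 ^\<^sub>m j *\<^sub>v q) = A0 ^\<^sub>m Suc j *\<^sub>v q"
      proof -
        have "A0 ^\<^sub>m Suc j = A0 * A0 ^\<^sub>m j" using pow_commute[OF A0, of j] by simp
        thus ?thesis using A0 q by (simp add: assoc_mult_mat_vec[of _ m m _ m])
      qed
      thus ?thesis using Fu[OF vj] by (simp add: D_def)
    qed
    finally have eq: "F ^\<^sub>m Suc t *\<^sub>v (A0 ^\<^sub>m j *\<^sub>v q) = F ^\<^sub>m t *\<^sub>v (A0 ^\<^sub>m Suc j *\<^sub>v q - D j \<cdot>\<^sub>v ell)" .
    show ?case
    proof (cases "j = m - 1")
      case True
      have "A0 ^\<^sub>m Suc j *\<^sub>v q - D j \<cdot>\<^sub>v ell = 0\<^sub>v m"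
        using True Dsmall[OF Suc.prems(1)] m0 ell by (simp add: ell_def)
      thus ?thesis using eq F mat_vec_zero[OF pow_carrier_mat[OF F, of t]] by simp
    next
      case False
      have "A0 ^\<^sub>m Suc j *\<^sub>v q - D j \<cdot>\<^sub>v ell = A0 ^\<^sub>m Suc j *\<^sub>v q"
        using False Dsmall[OF Suc.prems(1)] ell A0 q by (intro eq_vecI) auto
      moreover have "F ^\<^sub>m t *\<^sub>v (A0 ^\<^sub>m Suc j *\<^sub>v q) = 0\<^sub>v m"
        by (rule Suc.IH) (use Suc.prems False in auto)
      ultimately show ?thesis using eq by simp
    qed
  qed
  define Q where "Q = mat m m (\<lambda>(a,j). (A0 ^\<^sub>m j *\<^sub>v q) $ a)"
  have Q: "Q \<in> carrier_mat m m" unfolding Q_def by auto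
  have colQ: "col Q j = A0 ^\<^sub>m j *\<^sub>v q" if "j < m" for j
    using that A0 q by (intro eq_vecI) (auto simp: Q_def)
  have FQ: "F ^\<^sub>m m * Q = 0\<^sub>m m m"
  proof (rule mat_col_eqI)
    fix j assume "j < dim_col (0\<^sub>m m m :: real mat)"
    hence j: "j < m" by simp
    have "col (F ^\<^sub>m m * Q) j = F ^\<^sub>m m *\<^sub>v col Q j" by (rule col_mult2[OF _ Q j], use F in auto)
    also have "\<dots> = 0\<^sub>v m" unfolding colQ[OF j] by (rule Fkill, use j in auto)
    finally show "col (F ^\<^sub>m m * Q) j = col (0\<^sub>m m m) j" using j by simp
  qed (use F Q in auto)
  have Qker: "d = 0\<^sub>v m" if d: "d \<in> carrier_vec m" "Q *\<^sub>v d = 0\<^sub>v m" for d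
  proof -
    have Qd: "(\<Sum>j<m. d $ j * D (i + j)) = 0" if i: "i < m" for i
    proof -
      have Qdc: "Q *\<^sub>v d \<in> carrier_vec m" using Q d by auto
      have "0 = phi i \<bullet> (Q *\<^sub>v d)" using d phi[of i] by simp
      also have "\<dots> = (\<Sum>a<m. phi i $ a * (Q *\<^sub>v d) $ a)"
        by (simp only: scalar_prod_def carrier_vecD[OF Qdc] atLeast0LessThan)
      also have "\<dots> = (\<Sum>a<m. phi i $ a * (\<Sum>j<m. Q $$ (a,j) * d $ j))"
        by (rule sum.cong, simp, subst mv_idx[OF Q d(1)], auto)
      also have "\<dots> = (\<Sum>a<m. (\<Sum>j<m. d $ j * (phi i $ a * (A0 ^\<^sub>m j *\<^sub>v q) $ a)))"
        by (rule sum.cong, simp, simp add: sum_distrib_left, rule sum.cong, auto simp: Q_def)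
      also have "\<dots> = (\<Sum>j<m. d $ j * (\<Sum>a<m. phi i $ a * (A0 ^\<^sub>m j *\<^sub>v q) $ a))"
        by (subst sum.swap, simp add: sum_distrib_left)
      also have "\<dots> = (\<Sum>j<m. d $ j * D (i + j))"
      proof (rule sum.cong)
        fix j assume "j \<in> {..<m}"
        have "(\<Sum>a<m. phi i $ a * (A0 ^\<^sub>m j *\<^sub>v q) $ a) = phi i \<bullet> (A0 ^\<^sub>m j *\<^sub>v q)"
          by (simp only: scalar_prod_def carrier_vecD[OF pow_vec_carrier[OF A0 q]] atLeast0LessThan)
        then show "d $ j * (\<Sum>a<m. phi i $ a * (A0 ^\<^sub>m j *\<^sub>v q) $ a) = d $ j * D (i + j)"
          using phiA0[OF i, of j] by simp
      qed simp
      finally show ?thesis by simp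
    qed
    have "d $ (m - 1 - s) = 0" if "s < m" for s
      using that
    proof (induction s rule: less_induct)
      case (less s)
      have "0 = (\<Sum>j<m. d $ j * D (s + j))" using Qd[OF less.prems] by simp
      also have "\<dots> = (\<Sum>j<m. if j = m - 1 - s then d $ j else 0)"
      proof (rule sum.cong)
        fix j assume "j \<in> {..<m}"
        hence j: "j < m" by simp
        show "d $ j * D (s + j) = (if j = m - 1 - s then d $ j else 0)"
        proof (cases "j = m - 1 - s")
          case True
          then show ?thesis using Dsmall[of "s + j"] less.prems by simp
        next
          case False
          show ?thesis
          proof (cases "j < m - 1 - s")
            case True
            then show ?thesis using Dsmall[of "s + j"] less.prems by simp
          next
            case False2: False
            with False j have "m - 1 - j < s" by auto
            from less.IH[OF this] less.prems j have "d $ (m - 1 - (m - 1 - j)) = 0" by auto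
            moreover have "m - 1 - (m - 1 - j) = j" using j by auto
            ultimately show ?thesis using False by simp
          qed
        qed
      qed simp
      also have "\<dots> = d $ (m - 1 - s)" using less.prems by simp
      finally show ?case by simp
    qed
    note ds = this
    show ?thesis
    proof (rule eq_vecI)
      fix c assume "c < dim_vec (0\<^sub>v m :: real vec)"
      hence c: "c < m" by simp
      have "m - 1 - c < m" using c by simp
      from ds[OF this] have "d $ (m - 1 - (m - 1 - c)) = 0" .
      moreover have "m - 1 - (m - 1 - c) = c" using c by simp
      ultimately show "d $ c = 0\<^sub>v m $ c" using c by simp
    qed (use d in auto)
  qed
  obtain Qinv where Qinv: "Qinv \<in> carrier_mat m m" "Q * Qinv = 1\<^sub>m m" "Qinv * Q = 1\<^sub>m m"
    using inv_of_ker[OF Q Qker] by blast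
  have "F ^\<^sub>m m = F ^\<^sub>m m * (Q * Qinv)" using Qinv F by simp
  also have "\<dots> = (F ^\<^sub>m m * Q) * Qinv" using F Q Qinv by (simp add: assoc_mult_mat[of _ m m _ m _ m])
  also have "\<dots> = 0\<^sub>m m m" unfolding FQ using Qinv by simp
  finally show ?thesis using L unfolding F_def by blast
qed

lemma off_0[simp]: "off ns 0 = 0" by (simp add: off_def)
lemma off_Suc[simp]: "off ns (Suc q) = off ns q + ns q" by (simp add: off_def)
lemma off_le: "q \<le> q' \<Longrightarrow> off ns q \<le> off ns q'"
  unfolding off_def by (rule sum_mono2) auto
lemma off_mono2: "q < q' \<Longrightarrow> off ns q + ns q \<le> off ns q'"
  using off_le[of "Suc q" q' ns] by simp

lemma sum_split_add: "(\<Sum>c<a + b. f c) = (\<Sum>c<a. f c) + (\<Sum>c<b. f (a + c))" for a b :: nat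
  by (induction b) (auto simp: add.assoc)

lemma block_sum: "(\<Sum>c<off ns N. f c) = (\<Sum>q<N. \<Sum>b<ns q. f (off ns q + b))"
  by (induction N) (auto simp: sum_split_add)

lemma block_locate: "c < off ns N \<Longrightarrow> \<exists>q<N. off ns q \<le> c \<and> c < off ns q + ns q"
proof (induction N)
  case 0 then show ?case by simp
next
  case (Suc N)
  show ?case
  proof (cases "c < off ns N")
    case True then show ?thesis using Suc.IH by (meson less_SucI)
  next
    case False then show ?thesis using Suc.prems by (intro exI[of _ N]) auto
  qed
qed

lemma subv_carrier[simp]: "subv ns v j \<in> carrier_vec (ns j)" by (simp add: subv_def)
lemma subv_dim[simp]: "dim_vec (subv ns v j) = ns j" by (simp add: subv_def)
lemma subv_idx[simp]: "a < ns j \<Longrightarrow> subv ns v j $ a = v $ (off ns j + a)" by (simp add: subv_def)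
lemma blk_carrier[simp]: "blk ns M j q \<in> carrier_mat (ns j) (ns q)" by (simp add: blk_def)
lemma blk_idx[simp]: "a < ns j \<Longrightarrow> b < ns q \<Longrightarrow> blk ns M j q $$ (a,b) = M $$ (off ns j + a, off ns q + b)"
  by (simp add: blk_def)
lemma cblk_carrier[simp]: "cblk ns M q \<in> carrier_mat (dim_row M) (ns q)" by (simp add: cblk_def)
lemma cblk_idx[simp]: "a < dim_row M \<Longrightarrow> b < ns q \<Longrightarrow> cblk ns M q $$ (a,b) = M $$ (a, off ns q + b)"
  by (simp add: cblk_def)

lemma subv_minus: "v \<in> carrier_vec n \<Longrightarrow> w \<in> carrier_vec n \<Longrightarrow> off ns j + ns j \<le> n \<Longrightarrow>
  subv ns (v - w) j = subv ns v j - subv ns w j"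
  by (intro eq_vecI) auto

lemma subv_eq_all:
  assumes v: "v \<in> carrier_vec n" and w: "w \<in> carrier_vec n" and n: "off ns N = n"
    and eq: "\<And>q. q < N \<Longrightarrow> subv ns v q = subv ns w q"
  shows "v = w"
proof (rule eq_vecI)
  fix c assume "c < dim_vec w"
  hence c: "c < off ns N" using w n by simp
  from block_locate[OF c] obtain q where q: "q < N" "off ns q \<le> c" "c < off ns q + ns q" by auto
  have "subv ns v q $ (c - off ns q) = subv ns w q $ (c - off ns q)" using eq[OF q(1)] by simp
  thus "v $ c = w $ c" using q by simp
qed (use v w in auto)

lemma mv_blocks:
  fixes M :: "real mat"
  assumes M: "M \<in> carrier_mat R n" and v: "v \<in> carrier_vec n" and n: "off ns N = n" and a: "a < R"
  shows "(M *\<^sub>v v) $ a = (\<Sum>q<N. (cblk ns M q *\<^sub>v subv ns v q) $ a)"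
proof -
  have "(M *\<^sub>v v) $ a = (\<Sum>c<n. M $$ (a,c) * v $ c)" by (rule mv_idx[OF M v a])
  also have "\<dots> = (\<Sum>q<N. \<Sum>b<ns q. M $$ (a, off ns q + b) * v $ (off ns q + b))"
    unfolding n[symmetric] by (rule block_sum)
  also have "\<dots> = (\<Sum>q<N. (cblk ns M q *\<^sub>v subv ns v q) $ a)"
  proof (rule sum.cong)
    fix q assume "q \<in> {..<N}"
    have cb: "cblk ns M q \<in> carrier_mat R (ns q)" using cblk_carrier[of ns M q] M by simp
    have "(cblk ns M q *\<^sub>v subv ns v q) $ a = (\<Sum>b<ns q. cblk ns M q $$ (a,b) * subv ns v q $ b)"
      by (rule mv_idx[OF cb subv_carrier[of ns v q] a])
    also have "\<dots> = (\<Sum>b<ns q. M $$ (a, off ns q + b) * v $ (off ns q + b))"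
      using a M by (intro sum.cong) auto
    finally show "(\<Sum>b<ns q. M $$ (a, off ns q + b) * v $ (off ns q + b)) = (cblk ns M q *\<^sub>v subv ns v q) $ a" by simp
  qed simp
  finally show ?thesis .
qed

lemma cblk_blk_row:
  fixes M :: "real mat"
  assumes M: "M \<in> carrier_mat n n" and n: "off ns N = n" and j: "j < N" and a: "a < ns j"
    and s: "s \<in> carrier_vec (ns q)"
  shows "(cblk ns M q *\<^sub>v s) $ (off ns j + a) = (blk ns M j q *\<^sub>v s) $ a"
proof -
  have "off ns j + ns j \<le> n" using off_le[of "Suc j" N ns] j n by simp
  hence jn: "off ns j + a < n" using a by simp
  have cb: "cblk ns M q \<in> carrier_mat n (ns q)" using cblk_carrier[of ns M q] M by simp
  have "(cblk ns M q *\<^sub>v s) $ (off ns j + a) = (\<Sum>b<ns q. cblk ns M q $$ (off ns j + a, b) * s $ b)"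
    by (rule mv_idx[OF cb s jn])
  also have "\<dots> = (\<Sum>b<ns q. blk ns M j q $$ (a, b) * s $ b)"
    using jn a M by (intro sum.cong) auto
  also have "\<dots> = (blk ns M j q *\<^sub>v s) $ a" by (rule mv_idx[symmetric, OF blk_carrier[of ns M j q] s a])
  finally show ?thesis .
qed

lemma mv_carrier_iff[simp]: "(M :: real mat) *\<^sub>v v \<in> carrier_vec k \<longleftrightarrow> dim_row M = k"
  unfolding carrier_vec_def by simp
lemma blk_dims[simp]: "dim_row (blk ns M j q) = ns j" "dim_col (blk ns M j q) = ns q" by (auto simp: blk_def)
lemma cblk_dims[simp]: "dim_row (cblk ns M q) = dim_row M" "dim_col (cblk ns M q) = ns q" by (auto simp: cblk_def)

lemma zero_mat_vec[simp]: "s \<in> carrier_vec b \<Longrightarrow> 0\<^sub>m a b *\<^sub>v s = (0\<^sub>v a :: real vec)"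
  by (intro eq_vecI) (auto simp: scalar_prod_def)

lemma finsum_carrier: "finite S \<Longrightarrow> (\<And>q. q \<in> S \<Longrightarrow> f q \<in> carrier_vec d) \<Longrightarrow>
   finsum_vec TYPE(real) d f S \<in> carrier_vec d"
  by (rule finsum_vec_closed) auto

lemma finsum_idx: "finite S \<Longrightarrow> (\<And>q. q \<in> S \<Longrightarrow> f q \<in> carrier_vec d) \<Longrightarrow> a < d \<Longrightarrow>
   finsum_vec TYPE(real) d f S $ a = (\<Sum>q\<in>S. f q $ a)"
  by (rule index_finsum_vec) auto

lemma coupling_carrier: "coupling ns M v j \<in> carrier_vec (ns j)"
  unfolding coupling_def by (rule finsum_carrier) auto

lemma coupling_dim[simp]: "dim_vec (coupling ns M v j) = ns j"
  using coupling_carrier[of ns M v j] by auto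

lemma coupling_idx: "a < ns j \<Longrightarrow> coupling ns M v j $ a = (\<Sum>q<j. (blk ns M j q *\<^sub>v subv ns v q) $ a)"
  unfolding coupling_def by (rule finsum_idx) auto

lemma coupling_cong: "(\<And>q. q < j \<Longrightarrow> subv ns v q = subv ns v' q) \<Longrightarrow> coupling ns M v j = coupling ns M v' j"
  by (intro eq_vecI) (auto simp: coupling_idx coupling_carrier[THEN carrier_vecD] intro!: sum.cong)

lemma sum_lowtri:
  fixes f :: "nat \<Rightarrow> real"
  assumes j: "j < N" and z: "\<And>q. q < N \<Longrightarrow> j < q \<Longrightarrow> f q = 0"
  shows "(\<Sum>q<N. f q) = f j + (\<Sum>q<j. f q)"
proof -
  have "(\<Sum>q<N. f q) = (\<Sum>q<Suc j. f q)"
    by (rule sum.mono_neutral_right) (use j z in auto)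
  also have "\<dots> = f j + (\<Sum>q<j. f q)" by simp
  finally show ?thesis .
qed

lemma subv_Ab:
  fixes Ab :: "real mat"
  assumes Ab: "Ab \<in> carrier_mat n n" and n: "off ns N = n" and j: "j < N"
    and lowtri: "\<And>q. q < N \<Longrightarrow> j < q \<Longrightarrow> blk ns Ab j q = 0\<^sub>m (ns j) (ns q)"
    and v: "v \<in> carrier_vec n"
  shows "subv ns (Ab *\<^sub>v v) j = blk ns Ab j j *\<^sub>v subv ns v j + coupling ns Ab v j"
proof (rule eq_vecI)
  fix a assume "a < dim_vec (blk ns Ab j j *\<^sub>v subv ns v j + coupling ns Ab v j)"
  hence a: "a < ns j" by simp
  have "off ns j + ns j \<le> n" using off_le[of "Suc j" N ns] j n by simp
  hence jn: "off ns j + a < n" using a by simp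
  have "subv ns (Ab *\<^sub>v v) j $ a = (Ab *\<^sub>v v) $ (off ns j + a)" using a by simp
  also have "\<dots> = (\<Sum>q<N. (cblk ns Ab q *\<^sub>v subv ns v q) $ (off ns j + a))"
    by (rule mv_blocks[OF Ab v n jn])
  also have "\<dots> = (\<Sum>q<N. (blk ns Ab j q *\<^sub>v subv ns v q) $ a)"
    by (rule sum.cong, simp, rule cblk_blk_row[OF Ab n j a], simp)
  also have "\<dots> = (blk ns Ab j j *\<^sub>v subv ns v j) $ a + (\<Sum>q<j. (blk ns Ab j q *\<^sub>v subv ns v q) $ a)"
    by (rule sum_lowtri[OF j], use lowtri a in simp)
  also have "\<dots> = (blk ns Ab j j *\<^sub>v subv ns v j + coupling ns Ab v j) $ a"
    using a coupling_carrier[of ns Ab v j] by (simp add: coupling_idx)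
  finally show "subv ns (Ab *\<^sub>v v) j $ a = (blk ns Ab j j *\<^sub>v subv ns v j + coupling ns Ab v j) $ a" .
next
  show "dim_vec (subv ns (Ab *\<^sub>v v) j) = dim_vec (blk ns Ab j j *\<^sub>v subv ns v j + coupling ns Ab v j)"
    unfolding index_add_vec(2) coupling_dim subv_dim ..
qed

lemma CT_blocks:
  fixes CT :: "real mat"
  assumes CT: "CT \<in> carrier_mat R n" and n: "off ns N = n" and j: "j < N"
    and shape: "\<And>q. q < N \<Longrightarrow> j < q \<Longrightarrow> cblk ns CT q = 0\<^sub>m R (ns q)"
    and v: "v \<in> carrier_vec n"
  shows "CT *\<^sub>v v = cblk ns CT j *\<^sub>v subv ns v j + finsum_vec TYPE(real) R (\<lambda>q. cblk ns CT q *\<^sub>v subv ns v q) {..<j}"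
proof -
  have fc: "finsum_vec TYPE(real) R (\<lambda>q. cblk ns CT q *\<^sub>v subv ns v q) {..<j} \<in> carrier_vec R"
    by (rule finsum_carrier) (use CT in auto)
  show ?thesis
  proof (rule eq_vecI)
    fix a assume "a < dim_vec (cblk ns CT j *\<^sub>v subv ns v j + finsum_vec TYPE(real) R (\<lambda>q. cblk ns CT q *\<^sub>v subv ns v q) {..<j})"
    hence a: "a < R" using CT fc by simp
    have "(CT *\<^sub>v v) $ a = (\<Sum>q<N. (cblk ns CT q *\<^sub>v subv ns v q) $ a)"
      by (rule mv_blocks[OF CT v n a])
    also have "\<dots> = (cblk ns CT j *\<^sub>v subv ns v j) $ a + (\<Sum>q<j. (cblk ns CT q *\<^sub>v subv ns v q) $ a)"
      by (rule sum_lowtri[OF j], use shape a in simp)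
    also have "\<dots> = (cblk ns CT j *\<^sub>v subv ns v j + finsum_vec TYPE(real) R (\<lambda>q. cblk ns CT q *\<^sub>v subv ns v q) {..<j}) $ a"
      using a fc CT by (simp add: finsum_idx)
    finally show "(CT *\<^sub>v v) $ a = (cblk ns CT j *\<^sub>v subv ns v j + finsum_vec TYPE(real) R (\<lambda>q. cblk ns CT q *\<^sub>v subv ns v q) {..<j}) $ a" .
  next
    show "dim_vec (CT *\<^sub>v v) = dim_vec (cblk ns CT j *\<^sub>v subv ns v j + finsum_vec TYPE(real) R (\<lambda>q. cblk ns CT q *\<^sub>v subv ns v q) {..<j})"
      unfolding index_add_vec(2) carrier_vecD[OF fc] using CT by simp
  qed
qed

lemma finsum_mat_minus:
  fixes L :: "real mat"
  assumes S: "finite S" and L: "L \<in> carrier_mat d e"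
    and P: "\<And>q. q \<in> S \<Longrightarrow> P q \<in> carrier_mat d (m q)"
    and R: "\<And>q. q \<in> S \<Longrightarrow> R q \<in> carrier_mat e (m q)"
    and w: "\<And>q. q \<in> S \<Longrightarrow> w q \<in> carrier_vec (m q)"
  shows "finsum_vec TYPE(real) d (\<lambda>q. (P q - L * R q) *\<^sub>v w q) S
     = finsum_vec TYPE(real) d (\<lambda>q. P q *\<^sub>v w q) S - L *\<^sub>v finsum_vec TYPE(real) e (\<lambda>q. R q *\<^sub>v w q) S"
proof -
  have c1: "(P q - L * R q) *\<^sub>v w q \<in> carrier_vec d" if "q \<in> S" for q using P R L w that by auto
  have c2: "P q *\<^sub>v w q \<in> carrier_vec d" if "q \<in> S" for q using P w that by auto
  have c3: "R q *\<^sub>v w q \<in> carrier_vec e" if "q \<in> S" for q using R w that by auto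
  have f3: "finsum_vec TYPE(real) e (\<lambda>q. R q *\<^sub>v w q) S \<in> carrier_vec e" by (rule finsum_carrier[OF S c3])
  have f2: "finsum_vec TYPE(real) d (\<lambda>q. P q *\<^sub>v w q) S \<in> carrier_vec d" by (rule finsum_carrier[OF S c2])
  have f1: "finsum_vec TYPE(real) d (\<lambda>q. (P q - L * R q) *\<^sub>v w q) S \<in> carrier_vec d" by (rule finsum_carrier[OF S c1])
  show ?thesis
  proof (rule eq_vecI)
    fix a assume "a < dim_vec (finsum_vec TYPE(real) d (\<lambda>q. P q *\<^sub>v w q) S - L *\<^sub>v finsum_vec TYPE(real) e (\<lambda>q. R q *\<^sub>v w q) S)"
    hence a: "a < d" using f2 L by simp
    have "finsum_vec TYPE(real) d (\<lambda>q. (P q - L * R q) *\<^sub>v w q) S $ a = (\<Sum>q\<in>S. ((P q - L * R q) *\<^sub>v w q) $ a)"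
      by (rule finsum_idx[OF S c1 a])
    also have "\<dots> = (\<Sum>q\<in>S. (P q *\<^sub>v w q) $ a - (L *\<^sub>v (R q *\<^sub>v w q)) $ a)"
    proof (rule sum.cong)
      fix q assume q: "q \<in> S"
      have "(P q - L * R q) *\<^sub>v w q = P q *\<^sub>v w q - (L * R q) *\<^sub>v w q"
        using P[OF q] R[OF q] L w[OF q] by (simp add: minus_mult_distrib_mat_vec[of _ d "m q"])
      also have "(L * R q) *\<^sub>v w q = L *\<^sub>v (R q *\<^sub>v w q)"
        using R[OF q] L w[OF q] by (simp add: assoc_mult_mat_vec[of _ d e _ "m q"])
      finally show "((P q - L * R q) *\<^sub>v w q) $ a = (P q *\<^sub>v w q) $ a - (L *\<^sub>v (R q *\<^sub>v w q)) $ a"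
        using a P[OF q] R[OF q] L w[OF q] by simp
    qed simp
    also have "\<dots> = (\<Sum>q\<in>S. (P q *\<^sub>v w q) $ a) - (\<Sum>q\<in>S. (L *\<^sub>v (R q *\<^sub>v w q)) $ a)"
      by (simp add: sum_subtractf)
    also have "(\<Sum>q\<in>S. (L *\<^sub>v (R q *\<^sub>v w q)) $ a) = (L *\<^sub>v finsum_vec TYPE(real) e (\<lambda>q. R q *\<^sub>v w q) S) $ a"
    proof -
      have "(\<Sum>q\<in>S. (L *\<^sub>v (R q *\<^sub>v w q)) $ a) = (\<Sum>q\<in>S. \<Sum>b<e. L $$ (a,b) * (R q *\<^sub>v w q) $ b)"
        by (rule sum.cong, simp, rule mv_idx[OF L c3 a])
      also have "\<dots> = (\<Sum>b<e. L $$ (a,b) * (\<Sum>q\<in>S. (R q *\<^sub>v w q) $ b))"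
        by (subst sum.swap, simp add: sum_distrib_left)
      also have "\<dots> = (\<Sum>b<e. L $$ (a,b) * finsum_vec TYPE(real) e (\<lambda>q. R q *\<^sub>v w q) S $ b)"
        by (rule sum.cong, simp, subst finsum_idx[OF S c3], auto)
      also have "\<dots> = (L *\<^sub>v finsum_vec TYPE(real) e (\<lambda>q. R q *\<^sub>v w q) S) $ a"
        by (rule mv_idx[symmetric, OF L f3 a])
      finally show ?thesis .
    qed
    also have "(\<Sum>q\<in>S. (P q *\<^sub>v w q) $ a) = finsum_vec TYPE(real) d (\<lambda>q. P q *\<^sub>v w q) S $ a"
      by (rule finsum_idx[symmetric, OF S c2 a])
    finally have X: "finsum_vec TYPE(real) d (\<lambda>q. (P q - L * R q) *\<^sub>v w q) S $ a =
      finsum_vec TYPE(real) d (\<lambda>q. P q *\<^sub>v w q) S $ a - (L *\<^sub>v finsum_vec TYPE(real) e (\<lambda>q. R q *\<^sub>v w q) S) $ a" .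
    have dL: "dim_vec (L *\<^sub>v finsum_vec TYPE(real) e (\<lambda>q. R q *\<^sub>v w q) S) = d" using L by simp
    have Y: "(finsum_vec TYPE(real) d (\<lambda>q. P q *\<^sub>v w q) S - L *\<^sub>v finsum_vec TYPE(real) e (\<lambda>q. R q *\<^sub>v w q) S) $ a
      = finsum_vec TYPE(real) d (\<lambda>q. P q *\<^sub>v w q) S $ a - (L *\<^sub>v finsum_vec TYPE(real) e (\<lambda>q. R q *\<^sub>v w q) S) $ a"
      by (rule index_minus_vec) (use a dL in simp)
    show "finsum_vec TYPE(real) d (\<lambda>q. (P q - L * R q) *\<^sub>v w q) S $ a =
      (finsum_vec TYPE(real) d (\<lambda>q. P q *\<^sub>v w q) S - L *\<^sub>v finsum_vec TYPE(real) e (\<lambda>q. R q *\<^sub>v w q) S) $ a"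
      unfolding X Y ..
  next
    have dL: "dim_vec (L *\<^sub>v finsum_vec TYPE(real) e (\<lambda>q. R q *\<^sub>v w q) S) = d" using L by simp
    show "dim_vec (finsum_vec TYPE(real) d (\<lambda>q. (P q - L * R q) *\<^sub>v w q) S) =
      dim_vec (finsum_vec TYPE(real) d (\<lambda>q. P q *\<^sub>v w q) S - L *\<^sub>v finsum_vec TYPE(real) e (\<lambda>q. R q *\<^sub>v w q) S)"
      unfolding index_minus_vec(2) dL carrier_vecD[OF f1] ..
  qed
qed

lemma rtrancl_cross:
  assumes "(x, y) \<in> R\<^sup>*" "x \<in> S" "y \<notin> S"
  shows "\<exists>a b. (a, b) \<in> R \<and> a \<in> S \<and> b \<notin> S"
  using assms
proof (induction rule: rtrancl_induct)
  case base then show ?case by simp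
next
  case (step y z)
  then show ?case by (cases "y \<in> S") auto
qed

locale fresh =
  fixes N :: nat and E :: "nat \<Rightarrow> (nat \<times> nat) set" and Tp :: nat and j :: nat
    and tau :: "nat \<Rightarrow> nat \<Rightarrow> nat option"
  assumes jsc: "jointly_strongly_connected N E Tp"
    and jN: "j < N"
    and src: "\<And>k. tau j k = Some 0"
    and P1: "\<And>i k t. i < N \<Longrightarrow> i \<noteq> j \<Longrightarrow> tau i k = Some t \<Longrightarrow> \<exists>t'. tau i (Suc k) = Some t' \<and> t' \<le> t + 1"
    and P2: "\<And>i k l s. i < N \<Longrightarrow> i \<noteq> j \<Longrightarrow> l \<in> nbrs N E k i \<Longrightarrow> tau l k = Some s \<Longrightarrow>
               \<exists>t'. tau i (Suc k) = Some t' \<and> t' \<le> s + 1"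
begin

definition good :: "nat \<Rightarrow> nat \<Rightarrow> nat \<Rightarrow> bool" where
  "good s k i \<longleftrightarrow> (\<exists>t. tau i k = Some t \<and> t + s \<le> k)"

lemma good_Suc: "i < N \<Longrightarrow> good s k i \<Longrightarrow> good s (Suc k) i"
proof -
  assume i: "i < N" and g: "good s k i"
  then obtain t where t: "tau i k = Some t" "t + s \<le> k" unfolding good_def by auto
  show ?thesis
  proof (cases "i = j")
    case True
    then show ?thesis using src t unfolding good_def by auto
  next
    case False
    from P1[OF i False t(1)] obtain t' where "tau i (Suc k) = Some t'" "t' \<le> t + 1" by auto
    then show ?thesis using t unfolding good_def by auto
  qed
qed

lemma good_mono': assumes i: "i < N" and g: "good s k i" and kk: "k \<le> k'" shows "good s k' i"
  using kk
proof (induction k' rule: dec_induct)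
  case base then show ?case using g by simp
next
  case (step n) then show ?case using good_Suc[OF i] by auto
qed

lemma good_prop: "i < N \<Longrightarrow> l \<in> nbrs N E k i \<Longrightarrow> good s k l \<Longrightarrow> good s (Suc k) i"
proof -
  assume i: "i < N" and l: "l \<in> nbrs N E k i" and g: "good s k l"
  then obtain t where t: "tau l k = Some t" "t + s \<le> k" unfolding good_def by auto
  show ?thesis
  proof (cases "i = j")
    case True
    then show ?thesis using src t unfolding good_def by auto
  next
    case False
    from P2[OF i False l t(1)] obtain t' where "tau i (Suc k) = Some t'" "t' \<le> t + 1" by auto
    then show ?thesis using t unfolding good_def by auto
  qed
qed

lemma good_src: "s \<le> k \<Longrightarrow> good s k j"
  using src unfolding good_def by auto

definition SS :: "nat \<Rightarrow> nat \<Rightarrow> nat set" where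
  "SS s w = {i. i < N \<and> good s (w * Tp) i}"

lemma Tp1: "1 \<le> Tp" using jsc unfolding jointly_strongly_connected_def by auto

lemma SS_sub: "SS s w \<subseteq> SS s (Suc w)"
proof
  fix i assume "i \<in> SS s w"
  then show "i \<in> SS s (Suc w)" unfolding SS_def using good_mono' by auto
qed

lemma SS_grow:
  assumes sw: "s \<le> w * Tp" and ne: "SS s w \<noteq> {..<N}"
  shows "\<exists>b. b \<in> SS s (Suc w) \<and> b \<notin> SS s w"
proof -
  have jS: "j \<in> SS s w" unfolding SS_def using jN good_src[OF sw] by auto
  have "SS s w \<subseteq> {..<N}" unfolding SS_def by auto
  with ne obtain i0 where i0: "i0 < N" "i0 \<notin> SS s w" by auto
  let ?R = "(\<Union>t \<in> {w*Tp..<(w+1)*Tp}. E t) \<inter> ({..<N} \<times> {..<N})"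
  have "(j, i0) \<in> ?R\<^sup>*" using jsc jN i0(1) unfolding jointly_strongly_connected_def strongly_connected_def by blast
  from rtrancl_cross[OF this jS i0(2)] obtain a b where ab: "(a,b) \<in> ?R" "a \<in> SS s w" "b \<notin> SS s w" by blast
  then obtain t where t: "t \<in> {w*Tp..<(w+1)*Tp}" "(a,b) \<in> E t" "a < N" "b < N" by auto
  have "a \<noteq> b" using ab by auto
  hence l: "a \<in> nbrs N E t b" using t unfolding nbrs_def by auto
  have ga: "good s t a" using ab(2) t(1) good_mono'[of a s "w*Tp" t] unfolding SS_def by auto
  have "good s (Suc t) b" by (rule good_prop[OF t(4) l ga])
  hence "good s (Suc w * Tp) b" by (rule good_mono'[OF t(4)], use t(1) in auto)
  hence "b \<in> SS s (Suc w)" using t(4) unfolding SS_def by auto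
  with ab(3) show ?thesis by blast
qed

lemma SS_card:
  assumes sw: "s \<le> w * Tp"
  shows "min N (d + 1) \<le> card (SS s (w + d))"
proof (induction d)
  case 0
  have "j \<in> SS s w" unfolding SS_def using jN good_src[OF sw] by auto
  moreover have "finite (SS s w)" unfolding SS_def by auto
  ultimately have "1 \<le> card (SS s w)" by (metis One_nat_def Suc_leI card_gt_0_iff empty_iff)
  then show ?case by simp
next
  case (Suc d)
  have fin: "finite (SS s (w + Suc d))" unfolding SS_def by auto
  have sub: "SS s (w + d) \<subseteq> SS s (w + Suc d)" using SS_sub[of s "w + d"] by simp
  show ?case
  proof (cases "SS s (w + d) = {..<N}")
    case True
    then have "card (SS s (w + d)) = N" by simp
    moreover have "card (SS s (w + d)) \<le> card (SS s (w + Suc d))" by (rule card_mono[OF fin sub])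
    ultimately show ?thesis by simp
  next
    case False
    have "s \<le> (w + d) * Tp" using sw by (metis add_mult_distrib le_add1 order_trans)
    from SS_grow[OF this False] obtain b where b: "b \<in> SS s (Suc (w + d))" "b \<notin> SS s (w + d)" by blast
    have "SS s (w + d) \<subset> SS s (w + Suc d)" using sub b by auto
    hence "card (SS s (w + d)) < card (SS s (w + Suc d))" by (rule psubset_card_mono[OF fin])
    then show ?thesis using Suc.IH by simp
  qed
qed

lemma fresh_bound: "\<exists>K. \<forall>k\<ge>K. \<forall>i<N. \<exists>t. tau i k = Some t \<and> t + M \<le> k"
proof -
  have sw: "M * Tp \<le> M * Tp" by simp
  have "min N (N - 1 + 1) \<le> card (SS (M * Tp) (M + (N - 1)))" by (rule SS_card[OF sw])
  hence cN: "N \<le> card (SS (M * Tp) (M + (N - 1)))" using jN by simp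
  have sub: "SS (M * Tp) (M + (N - 1)) \<subseteq> {..<N}" unfolding SS_def by auto
  have eq: "SS (M * Tp) (M + (N - 1)) = {..<N}"
    by (rule card_subset_eq[OF _ sub], simp, use cN card_mono[OF _ sub] in force)
  show ?thesis
  proof (rule exI[of _ "(M + (N - 1)) * Tp"], intro allI impI)
    fix k i assume k: "(M + (N - 1)) * Tp \<le> k" and i: "i < N"
    have "good (M * Tp) ((M + (N - 1)) * Tp) i" using eq i unfolding SS_def by auto
    hence "good (M * Tp) k i" by (rule good_mono'[OF i _ k])
    then obtain t where t: "tau i k = Some t" "t + M * Tp \<le> k" unfolding good_def by auto
    moreover have MM: "M * 1 \<le> M * Tp" by (rule mult_le_mono2[OF Tp1])
    moreover have "t + M \<le> k" using t(2) MM by linarith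
    ultimately show "\<exists>t. tau i k = Some t \<and> t + M \<le> k" by blast
  qed
qed

end

locale sysrun =
  fixes N n Tp :: nat and A :: "real mat" and Cs :: "nat \<Rightarrow> real mat" and r :: "nat \<Rightarrow> nat"
    and E :: "nat \<Rightarrow> (nat \<times> nat) set" and T Tinv :: "real mat" and ns :: "nat \<Rightarrow> nat"
    and L :: "nat \<Rightarrow> real mat" and z0 :: "real vec"
    and tau :: "nat \<Rightarrow> nat \<Rightarrow> nat \<Rightarrow> nat option" and zh :: "nat \<Rightarrow> nat \<Rightarrow> real vec"
  assumes A: "A \<in> carrier_mat n n"
    and C: "\<forall>i<N. Cs i \<in> carrier_mat (r i) n"
    and graph: "jointly_strongly_connected N E Tp"
    and T: "T \<in> carrier_mat n n" "Tinv \<in> carrier_mat n n" "T * Tinv = 1\<^sub>m n" "Tinv * T = 1\<^sub>m n"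
    and ns: "(\<Sum>j<N. ns j) = n"
    and lowtri: "\<forall>j<N. \<forall>q<N. j < q \<longrightarrow> blk ns (Tinv * A * T) j q = 0\<^sub>m (ns j) (ns q)"
    and Cshape: "\<forall>i<N. \<forall>q<N. i < q \<longrightarrow> cblk ns (Cs i * T) q = 0\<^sub>m (r i) (ns q)"
    and Lc: "\<forall>j<N. L j \<in> carrier_mat (ns j) (r j)"
    and Lnil: "\<forall>j<N. (blk ns (Tinv * A * T) j j - L j * cblk ns (Cs j * T) j) ^\<^sub>m (ns j) = 0\<^sub>m (ns j) (ns j)"
    and z0: "z0 \<in> carrier_vec n"
    and run: "alg_run N n E ns (Tinv * A * T) (\<lambda>i. Cs i * T) L
                (\<lambda>i k. Cs i *\<^sub>v ((A ^\<^sub>m k) *\<^sub>v (T *\<^sub>v z0))) tau zh"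
begin

abbreviation "Ab \<equiv> Tinv * A * T"
abbreviation "zz k \<equiv> (Ab ^\<^sub>m k) *\<^sub>v z0"
abbreviation "yy i k \<equiv> Cs i *\<^sub>v ((A ^\<^sub>m k) *\<^sub>v (T *\<^sub>v z0))"

lemma Ab_c: "Ab \<in> carrier_mat n n" using A T by auto
lemma offN: "off ns N = n" using ns by (simp add: off_def)
lemma zz_c: "zz k \<in> carrier_vec n" by (rule pow_vec_carrier[OF Ab_c z0])
lemma zz_Suc: "zz (Suc k) = Ab *\<^sub>v zz k"
proof -
  have "Ab ^\<^sub>m Suc k = Ab * Ab ^\<^sub>m k" using pow_commute[OF Ab_c, of k] by simp
  thus ?thesis using Ab_c z0 by (simp add: assoc_mult_mat_vec[of _ n n _ n])
qed

lemma TT: "X \<in> carrier_mat n nc \<Longrightarrow> T * (Tinv * X) = X"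
proof -
  assume X: "X \<in> carrier_mat n nc"
  have "T * (Tinv * X) = (T * Tinv) * X" using assoc_mult_mat[of T n n Tinv n X nc] X T by simp
  also have "\<dots> = X" using T(3) X by simp
  finally show ?thesis .
qed

lemma TAb: "T * Ab ^\<^sub>m k = A ^\<^sub>m k * T"
proof (induction k)
  case 0 then show ?case using T A by simp
next
  case (Suc k)
  have "T * Ab ^\<^sub>m Suc k = (T * Ab ^\<^sub>m k) * Ab" using T Ab_c by (simp add: assoc_mult_mat[of _ n n _ n _ n])
  also have "\<dots> = A ^\<^sub>m k * T * (Tinv * A * T)" using Suc by simp
  also have "A ^\<^sub>m k * T * (Tinv * A * T) = A ^\<^sub>m k * (T * (Tinv * (A * T)))"
    using A T by (simp add: assoc_mult_mat[of _ n n _ n _ n])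
  also have "T * (Tinv * (A * T)) = A * T" by (rule TT[of _ n], use A T in simp)
  also have "A ^\<^sub>m k * (A * T) = A ^\<^sub>m Suc k * T"
    using A T by (simp add: assoc_mult_mat[of _ n n _ n _ n])
  finally show ?case .
qed

lemma x_eq: "(A ^\<^sub>m k) *\<^sub>v (T *\<^sub>v z0) = T *\<^sub>v zz k"
proof -
  have "T *\<^sub>v zz k = (T * Ab ^\<^sub>m k) *\<^sub>v z0" using T Ab_c z0 by (simp add: assoc_mult_mat_vec[of _ n n _ n])
  also have "\<dots> = (A ^\<^sub>m k * T) *\<^sub>v z0" unfolding TAb ..
  also have "\<dots> = (A ^\<^sub>m k) *\<^sub>v (T *\<^sub>v z0)" using A T z0 by (simp add: assoc_mult_mat_vec[of _ n n _ n])
  finally show ?thesis by simp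
qed

lemma yy_eq: "i < N \<Longrightarrow> yy i k = (Cs i * T) *\<^sub>v zz k"
  using C T zz_c[of k] x_eq[of k] by (simp add: assoc_mult_mat_vec[of _ "r i" n _ n])

lemma zh_c: "i < N \<Longrightarrow> zh i k \<in> carrier_vec n" using run unfolding alg_run_def by auto

lemma src_run: "j < N \<Longrightarrow> tau j j k = Some 0 \<and> source_update ns Ab (\<lambda>i. Cs i * T) L (\<lambda>i k. yy i k) zh j k"
  using run unfolding alg_run_def by auto

lemma tau0: "j < N \<Longrightarrow> i < N \<Longrightarrow> i \<noteq> j \<Longrightarrow> tau j i 0 = None"
  using run unfolding alg_run_def by auto

lemma step_run: "j < N \<Longrightarrow> i < N \<Longrightarrow> i \<noteq> j \<Longrightarrow>
  (case tau j i k of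
     None \<Rightarrow> (if Mset N E tau j i k \<noteq> {} then adopt_min N ns Ab tau zh (Mset N E tau j i k) j i k
              else tau j i (Suc k) = None \<and> open_loop ns Ab zh j i k)
   | Some t \<Rightarrow> (if {l \<in> Mset N E tau j i k. the (tau j l k) < t} \<noteq> {}
              then adopt_min N ns Ab tau zh {l \<in> Mset N E tau j i k. the (tau j l k) < t} j i k
              else tau j i (Suc k) = Some (t + 1) \<and> open_loop ns Ab zh j i k))"
  using run unfolding alg_run_def Let_def by auto

lemma P1: "j < N \<Longrightarrow> i < N \<Longrightarrow> i \<noteq> j \<Longrightarrow> tau j i k = Some t \<Longrightarrow> \<exists>t'. tau j i (Suc k) = Some t' \<and> t' \<le> t + 1"
  using step_run[of j i k] unfolding adopt_min_def by (auto split: if_splits)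

lemma P2: "j < N \<Longrightarrow> i < N \<Longrightarrow> i \<noteq> j \<Longrightarrow> l \<in> nbrs N E k i \<Longrightarrow> tau j l k = Some s \<Longrightarrow>
   \<exists>t'. tau j i (Suc k) = Some t' \<and> t' \<le> s + 1"
proof -
  assume j: "j < N" and i: "i < N" and ij: "i \<noteq> j" and l: "l \<in> nbrs N E k i" and s: "tau j l k = Some s"
  have lM: "l \<in> Mset N E tau j i k" using l s unfolding Mset_def by auto
  note st = step_run[OF j i ij, of k]
  show ?thesis
  proof (cases "tau j i k")
    case None
    have "Mset N E tau j i k \<noteq> {}" using lM by auto
    with st None have "adopt_min N ns Ab tau zh (Mset N E tau j i k) j i k" by auto
    then obtain u where u: "u \<in> Mset N E tau j i k" "\<forall>l'\<in>Mset N E tau j i k. the (tau j u k) \<le> the (tau j l' k)"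
      "tau j i (Suc k) = Some (the (tau j u k) + 1)" unfolding adopt_min_def by auto
    have "the (tau j u k) \<le> s" using u(2) lM s by force
    then show ?thesis using u(3) by auto
  next
    case (Some t)
    show ?thesis
    proof (cases "{l \<in> Mset N E tau j i k. the (tau j l k) < t} \<noteq> {}")
      case True
      with st Some have "adopt_min N ns Ab tau zh {l \<in> Mset N E tau j i k. the (tau j l k) < t} j i k" by auto
      then obtain u where u: "u \<in> {l \<in> Mset N E tau j i k. the (tau j l k) < t}"
        "\<forall>l'\<in>{l \<in> Mset N E tau j i k. the (tau j l k) < t}. the (tau j u k) \<le> the (tau j l' k)"
        "tau j i (Suc k) = Some (the (tau j u k) + 1)" unfolding adopt_min_def by auto
      have "the (tau j u k) \<le> s"
      proof (cases "s < t")
        case True then show ?thesis using u(2) lM s by force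
      next
        case False then show ?thesis using u(1) by auto
      qed
      then show ?thesis using u(3) by auto
    next
      case False
      with st Some have "tau j i (Suc k) = Some (t + 1)" by auto
      moreover have "\<not> s < t" using False lM s by auto
      ultimately show ?thesis by auto
    qed
  qed
qed

lemma H: "j < N \<Longrightarrow> i < N \<Longrightarrow> i \<noteq> j \<Longrightarrow> tau j i (Suc k) = Some t' \<Longrightarrow>
   (\<exists>u s. u < N \<and> tau j u k = Some s \<and> t' = s + 1 \<and> adopt ns Ab zh j i u k) \<or>
   (\<exists>t. tau j i k = Some t \<and> t' = t + 1 \<and> open_loop ns Ab zh j i k)"
proof -
  assume j: "j < N" and i: "i < N" and ij: "i \<noteq> j" and t': "tau j i (Suc k) = Some t'"
  note st = step_run[OF j i ij, of k]
  have fromM: "\<exists>u s. u < N \<and> tau j u k = Some s \<and> t' = s + 1 \<and> adopt ns Ab zh j i u k"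
    if "adopt_min N ns Ab tau zh S j i k" "S \<subseteq> Mset N E tau j i k" for S
  proof -
    from that(1) obtain u where u: "u \<in> S" "tau j i (Suc k) = Some (the (tau j u k) + 1)" "adopt ns Ab zh j i u k"
      unfolding adopt_min_def by auto
    have uM: "u \<in> Mset N E tau j i k" using u(1) that(2) by auto
    then obtain s where s: "tau j u k = Some s" unfolding Mset_def by auto
    have "u < N" using uM unfolding Mset_def nbrs_def by auto
    thus ?thesis using u s t' by auto
  qed
  show ?thesis
  proof (cases "tau j i k")
    case None
    show ?thesis
    proof (cases "Mset N E tau j i k \<noteq> {}")
      case True
      with st None have "adopt_min N ns Ab tau zh (Mset N E tau j i k) j i k" by auto
      from fromM[OF this] show ?thesis by auto
    next
      case False
      with st None t' show ?thesis by auto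
    qed
  next
    case (Some t)
    show ?thesis
    proof (cases "{l \<in> Mset N E tau j i k. the (tau j l k) < t} \<noteq> {}")
      case True
      with st Some have "adopt_min N ns Ab tau zh {l \<in> Mset N E tau j i k. the (tau j l k) < t} j i k" by auto
      from fromM[OF this] show ?thesis by auto
    next
      case False
      with st Some t' show ?thesis by auto
    qed
  qed
qed

lemma true_dyn: "j < N \<Longrightarrow> subv ns (zz (Suc k)) j = blk ns Ab j j *\<^sub>v subv ns (zz k) j + coupling ns Ab (zz k) j"
  unfolding zz_Suc by (rule subv_Ab[OF Ab_c offN _ _ zz_c], use lowtri in auto)

lemma adopt_ok:
  assumes j: "j < N" and ad: "adopt ns Ab zh j i u k" and eu: "subv ns (zh u k) j = subv ns (zz k) j"
    and ei: "\<And>q. q < j \<Longrightarrow> subv ns (zh i k) q = subv ns (zz k) q"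
  shows "subv ns (zh i (Suc k)) j = subv ns (zz (Suc k)) j"
  using ad coupling_cong[OF ei, where M = Ab] unfolding adopt_def true_dyn[OF j] eu by simp

lemma open_ok:
  assumes j: "j < N" and ad: "open_loop ns Ab zh j i k" and eu: "subv ns (zh i k) j = subv ns (zz k) j"
    and ei: "\<And>q. q < j \<Longrightarrow> subv ns (zh i k) q = subv ns (zz k) q"
  shows "subv ns (zh i (Suc k)) j = subv ns (zz (Suc k)) j"
  using ad coupling_cong[OF ei, where M = Ab] unfolding open_loop_def true_dyn[OF j] eu by simp

end

lemma finsum_cong':
  assumes S: "finite S" and fc: "\<And>q. q \<in> S \<Longrightarrow> f q \<in> carrier_vec d" and gc: "\<And>q. q \<in> S \<Longrightarrow> g q \<in> carrier_vec d"
    and eq: "\<And>q. q \<in> S \<Longrightarrow> f q = g q"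
  shows "finsum_vec TYPE(real) d f S = finsum_vec TYPE(real) d g S"
proof -
  have fg: "finsum_vec TYPE(real) d g S \<in> carrier_vec d" by (rule finsum_carrier[OF S]) (rule gc)
  have ff: "finsum_vec TYPE(real) d f S \<in> carrier_vec d" by (rule finsum_carrier[OF S]) (rule fc)
  show ?thesis
  proof (rule eq_vecI)
    fix a assume "a < dim_vec (finsum_vec TYPE(real) d g S)"
    hence a: "a < d" using fg by simp
    have 1: "finsum_vec TYPE(real) d f S $ a = (\<Sum>q\<in>S. f q $ a)" by (rule finsum_idx[OF S _ a]) (rule fc)
    have 2: "finsum_vec TYPE(real) d g S $ a = (\<Sum>q\<in>S. g q $ a)" by (rule finsum_idx[OF S _ a]) (rule gc)
    have 3: "(\<Sum>q\<in>S. f q $ a) = (\<Sum>q\<in>S. g q $ a)" by (rule sum.cong[OF refl]) (simp only: eq)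
    show "finsum_vec TYPE(real) d f S $ a = finsum_vec TYPE(real) d g S $ a"
      unfolding 1 2 3 ..
  next
    show "dim_vec (finsum_vec TYPE(real) d f S) = dim_vec (finsum_vec TYPE(real) d g S)"
      using carrier_vecD[OF fg] carrier_vecD[OF ff] by simp
  qed
qed

lemma cblk_carrier': "M \<in> carrier_mat R c \<Longrightarrow> cblk ns M q \<in> carrier_mat R (ns q)"
  using cblk_carrier[of ns M q] carrier_matD(1)[of M R c] by (simp only:)

context sysrun
begin

abbreviation "CT j \<equiv> Cs j * T"
abbreviation "Fj j \<equiv> blk ns Ab j j - L j * cblk ns (CT j) j"

lemma CT_c: "j < N \<Longrightarrow> CT j \<in> carrier_mat (r j) n" using C T by auto

lemma src_err:
  assumes j: "j < N" and ei: "\<And>q. q < j \<Longrightarrow> subv ns (zh j k) q = subv ns (zz k) q"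
  shows "subv ns (zh j (Suc k)) j - subv ns (zz (Suc k)) j = Fj j *\<^sub>v (subv ns (zh j k) j - subv ns (zz k) j)"
proof -
  let ?Ajj = "blk ns Ab j j" and ?Cjj = "cblk ns (CT j) j"
  let ?s = "subv ns (zh j k) j" and ?w = "subv ns (zz k) j"
  let ?Sa = "coupling ns Ab (zz k) j"
  let ?Sc = "finsum_vec TYPE(real) (r j) (\<lambda>q. cblk ns (CT j) q *\<^sub>v subv ns (zz k) q) {..<j}"
  have Lj: "L j \<in> carrier_mat (ns j) (r j)" using Lc j by auto
  have Cjj: "?Cjj \<in> carrier_mat (r j) (ns j)" using C j cblk_carrier[of ns "CT j" j] by auto
  have Ajj: "?Ajj \<in> carrier_mat (ns j) (ns j)" by simp
  have Sc: "?Sc \<in> carrier_vec (r j)" by (rule finsum_carrier) (use CT_c[OF j] cblk_carrier'[OF CT_c[OF j]] in auto)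
  have Sa: "?Sa \<in> carrier_vec (ns j)" by (rule coupling_carrier)
  have su: "source_update ns Ab (\<lambda>i. Cs i * T) L (\<lambda>i k. yy i k) zh j k" using src_run[OF j] by auto
  hence e1: "subv ns (zh j (Suc k)) j = (?Ajj - L j * ?Cjj) *\<^sub>v ?s
       + finsum_vec TYPE(real) (ns j) (\<lambda>q. (blk ns Ab j q - L j * cblk ns (CT j) q) *\<^sub>v subv ns (zh j k) q) {..<j}
       + L j *\<^sub>v yy j k" unfolding source_update_def by simp
  have e2: "finsum_vec TYPE(real) (ns j) (\<lambda>q. (blk ns Ab j q - L j * cblk ns (CT j) q) *\<^sub>v subv ns (zh j k) q) {..<j}
     = finsum_vec TYPE(real) (ns j) (\<lambda>q. (blk ns Ab j q - L j * cblk ns (CT j) q) *\<^sub>v subv ns (zz k) q) {..<j}"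
    by (rule finsum_cong') (use ei Lj CT_c[OF j] cblk_carrier'[OF CT_c[OF j]] in auto)
  have e3: "finsum_vec TYPE(real) (ns j) (\<lambda>q. (blk ns Ab j q - L j * cblk ns (CT j) q) *\<^sub>v subv ns (zz k) q) {..<j}
     = ?Sa - L j *\<^sub>v ?Sc"
    unfolding coupling_def
    by (rule finsum_mat_minus[OF _ Lj, where m = ns]) (use CT_c[OF j] cblk_carrier'[OF CT_c[OF j]] in auto)
  have e4: "yy j k = ?Cjj *\<^sub>v ?w + ?Sc"
    unfolding yy_eq[OF j] by (rule CT_blocks[OF CT_c[OF j] offN j _ zz_c], use Cshape j in auto)
  have e5: "subv ns (zz (Suc k)) j = ?Ajj *\<^sub>v ?w + ?Sa" by (rule true_dyn[OF j])
  have zh1: "subv ns (zh j (Suc k)) j = (?Ajj - L j * ?Cjj) *\<^sub>v ?s + (?Sa - L j *\<^sub>v ?Sc) + L j *\<^sub>v (?Cjj *\<^sub>v ?w + ?Sc)"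
    using e1 e2 e3 e4 by simp
  show ?thesis
  proof (rule eq_vecI)
    fix a assume "a < dim_vec (Fj j *\<^sub>v (?s - ?w))"
    hence a: "a < ns j" using Lj by simp
    have i1: "((?Ajj - L j * ?Cjj) *\<^sub>v v) $ a = (?Ajj *\<^sub>v v) $ a - (L j *\<^sub>v (?Cjj *\<^sub>v v)) $ a"
      if v: "v \<in> carrier_vec (ns j)" for v
    proof -
      have "(?Ajj - L j * ?Cjj) *\<^sub>v v = ?Ajj *\<^sub>v v - (L j * ?Cjj) *\<^sub>v v"
        by (rule minus_mult_distrib_mat_vec[OF Ajj _ v]) (use Lj Cjj in auto)
      also have "(L j * ?Cjj) *\<^sub>v v = L j *\<^sub>v (?Cjj *\<^sub>v v)" by (rule assoc_mult_mat_vec[OF Lj Cjj v])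
      finally show ?thesis using a Lj by simp
    qed
    have i2: "(L j *\<^sub>v (?Cjj *\<^sub>v ?w + ?Sc)) $ a = (L j *\<^sub>v (?Cjj *\<^sub>v ?w)) $ a + (L j *\<^sub>v ?Sc) $ a"
    proof -
      have "L j *\<^sub>v (?Cjj *\<^sub>v ?w + ?Sc) = L j *\<^sub>v (?Cjj *\<^sub>v ?w) + L j *\<^sub>v ?Sc"
        by (rule mult_add_distrib_mat_vec[OF Lj _ Sc]) (use Cjj in auto)
      thus ?thesis using a Lj by simp
    qed
    have sw: "?s - ?w \<in> carrier_vec (ns j)" by simp
    have "(subv ns (zh j (Suc k)) j - subv ns (zz (Suc k)) j) $ a
       = ((?Ajj - L j * ?Cjj) *\<^sub>v ?s) $ a + (?Sa $ a - (L j *\<^sub>v ?Sc) $ a) + (L j *\<^sub>v (?Cjj *\<^sub>v ?w + ?Sc)) $ a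
         - ((?Ajj *\<^sub>v ?w) $ a + ?Sa $ a)"
      unfolding zh1 e5 using a Lj Sa Sc Cjj by simp
    also have "\<dots> = (?Ajj *\<^sub>v ?s) $ a - (L j *\<^sub>v (?Cjj *\<^sub>v ?s)) $ a
         - ((?Ajj *\<^sub>v ?w) $ a - (L j *\<^sub>v (?Cjj *\<^sub>v ?w)) $ a)"
      unfolding i1[OF subv_carrier[of ns "zh j k" j]] i1[OF subv_carrier[of ns "zz k" j]] i2 by simp
    also have "\<dots> = (Fj j *\<^sub>v ?s) $ a - (Fj j *\<^sub>v ?w) $ a"
      unfolding i1[OF subv_carrier[of ns "zh j k" j]] i1[OF subv_carrier[of ns "zz k" j]] ..
    also have "\<dots> = (Fj j *\<^sub>v (?s - ?w)) $ a"
    proof -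
      have "Fj j *\<^sub>v (?s - ?w) = Fj j *\<^sub>v ?s - Fj j *\<^sub>v ?w"
        by (rule mult_minus_distrib_mat_vec) (use Lj Cjj in auto)
      thus ?thesis using a Lj by simp
    qed
    finally show "(subv ns (zh j (Suc k)) j - subv ns (zz (Suc k)) j) $ a = (Fj j *\<^sub>v (?s - ?w)) $ a" .
  next
    show "dim_vec (subv ns (zh j (Suc k)) j - subv ns (zz (Suc k)) j) = dim_vec (Fj j *\<^sub>v (?s - ?w))"
      using Lj by simp
  qed
qed

end

context sysrun
begin

lemma Lj_c: "j < N \<Longrightarrow> L j \<in> carrier_mat (ns j) (r j)" using Lc by auto

lemma Fj_c: "j < N \<Longrightarrow> Fj j \<in> carrier_mat (ns j) (ns j)"
proof -
  assume j: "j < N"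
  have "L j * cblk ns (CT j) j \<in> carrier_mat (ns j) (ns j)"
    by (rule mult_carrier_mat[OF Lj_c[OF j] cblk_carrier'[OF CT_c[OF j]]])
  thus ?thesis by (rule minus_carrier_mat)
qed

lemma Fj_pow0: "j < N \<Longrightarrow> ns j \<le> t \<Longrightarrow> Fj j ^\<^sub>m t = 0\<^sub>m (ns j) (ns j)"
proof -
  assume j: "j < N" and t: "ns j \<le> t"
  show ?thesis using t
  proof (induction t rule: dec_induct)
    case base then show ?case using Lnil j by auto
  next
    case (step t)
    have "Fj j ^\<^sub>m Suc t = Fj j ^\<^sub>m t * Fj j" by simp
    also have "\<dots> = 0\<^sub>m (ns j) (ns j) * Fj j" using step by simp
    also have "\<dots> = 0\<^sub>m (ns j) (ns j)" by (rule left_mult_zero_mat[OF Fj_c[OF j]])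
    finally show ?case .
  qed
qed

lemma block_step:
  assumes j: "j < N"
    and K0: "\<And>k i q. K0 \<le> k \<Longrightarrow> i < N \<Longrightarrow> q < j \<Longrightarrow> subv ns (zh i k) q = subv ns (zz k) q"
  shows "\<exists>K. \<forall>k\<ge>K. \<forall>i<N. subv ns (zh i k) j = subv ns (zz k) j"
proof -
  let ?F = "Fj j"
  have F: "?F \<in> carrier_mat (ns j) (ns j)" by (rule Fj_c[OF j])
  define d where "d = (\<lambda>k. subv ns (zh j k) j - subv ns (zz k) j)"
  have dc: "d k \<in> carrier_vec (ns j)" for k unfolding d_def by simp
  have dK: "d (K0 + t) = ?F ^\<^sub>m t *\<^sub>v d K0" for t
  proof (induction t)
    case 0 then show ?case using dc[of K0] Lj_c[OF j] by simp
  next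
    case (Suc t)
    have "d (K0 + Suc t) = d (Suc (K0 + t))" by simp
    also have "\<dots> = ?F *\<^sub>v d (K0 + t)"
      unfolding d_def by (rule src_err[OF j], rule K0) (use j in auto)
    also have "\<dots> = ?F *\<^sub>v (?F ^\<^sub>m t *\<^sub>v d K0)" using Suc by simp
    also have "\<dots> = (?F * ?F ^\<^sub>m t) *\<^sub>v d K0"
      using F dc[of K0] by (simp add: assoc_mult_mat_vec[of _ "ns j" "ns j" _ "ns j"])
    also have "?F * ?F ^\<^sub>m t = ?F ^\<^sub>m Suc t" using pow_commute[OF F, of t] by simp
    finally show ?case .
  qed
  define M where "M = K0 + ns j"
  have srcok: "subv ns (zh j k) j = subv ns (zz k) j" if k: "M \<le> k" for k
  proof -
    define t where "t = k - K0"
    have t: "k = K0 + t" "ns j \<le> t" using k unfolding M_def t_def by auto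
    have "d k = 0\<^sub>v (ns j)" unfolding t(1) dK Fj_pow0[OF j t(2)] using dc by simp
    hence dz: "(subv ns (zh j k) j - subv ns (zz k) j) = 0\<^sub>v (ns j)" unfolding d_def .
    show ?thesis
    proof (rule eq_vecI)
      fix a assume "a < dim_vec (subv ns (zz k) j)"
      hence a: "a < ns j" by simp
      have "(subv ns (zh j k) j - subv ns (zz k) j) $ a = 0" using dz a by simp
      thus "subv ns (zh j k) j $ a = subv ns (zz k) j $ a" using a by simp
    qed simp
  qed
  have inv: "subv ns (zh i k) j = subv ns (zz k) j" if "i < N" "tau j i k = Some t" "M + t \<le> k" for i k t
    using that
  proof (induction k arbitrary: i t)
    case 0
    show ?case
    proof (cases "i = j")
      case True then show ?thesis using srcok 0 by auto
    next
      case False then show ?thesis using tau0[OF j 0(1) False] 0 by simp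
    qed
  next
    case (Suc k)
    show ?case
    proof (cases "i = j")
      case True then show ?thesis using srcok Suc.prems by auto
    next
      case False
      have kK: "K0 \<le> k" using Suc.prems unfolding M_def
      proof -
        have "t \<noteq> 0 \<or> True" by simp
        from H[OF j Suc.prems(1) False Suc.prems(2)]
        have "t \<ge> 1" by auto
        thus ?thesis using Suc.prems(3) unfolding M_def by simp
      qed
      have ei: "\<And>q. q < j \<Longrightarrow> subv ns (zh i k) q = subv ns (zz k) q" using K0[OF kK Suc.prems(1)] by simp
      from H[OF j Suc.prems(1) False Suc.prems(2)]
      show ?thesis
      proof
        assume "\<exists>u s. u < N \<and> tau j u k = Some s \<and> t = s + 1 \<and> adopt ns Ab zh j i u k"
        then obtain u s where u: "u < N" "tau j u k = Some s" "t = s + 1" "adopt ns Ab zh j i u k" by blast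
        have "subv ns (zh u k) j = subv ns (zz k) j" by (rule Suc.IH[OF u(1) u(2)]) (use Suc.prems u in simp)
        from adopt_ok[OF j u(4) this ei] show ?thesis .
      next
        assume "\<exists>t0. tau j i k = Some t0 \<and> t = t0 + 1 \<and> open_loop ns Ab zh j i k"
        then obtain t0 where t0: "tau j i k = Some t0" "t = t0 + 1" "open_loop ns Ab zh j i k" by blast
        have "subv ns (zh i k) j = subv ns (zz k) j" by (rule Suc.IH[OF Suc.prems(1) t0(1)]) (use Suc.prems t0 in simp)
        from open_ok[OF j t0(3) this ei] show ?thesis .
      qed
    qed
  qed
  interpret fr: fresh N E Tp j "tau j"
  proof
    show "jointly_strongly_connected N E Tp" by (rule graph)
    show "j < N" by (rule j)
    show "\<And>k. tau j j k = Some 0" using src_run[OF j] by auto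
    show "\<And>i k t. i < N \<Longrightarrow> i \<noteq> j \<Longrightarrow> tau j i k = Some t \<Longrightarrow> \<exists>t'. tau j i (Suc k) = Some t' \<and> t' \<le> t + 1"
      using P1[OF j] by blast
    show "\<And>i k l s. i < N \<Longrightarrow> i \<noteq> j \<Longrightarrow> l \<in> nbrs N E k i \<Longrightarrow> tau j l k = Some s \<Longrightarrow>
               \<exists>t'. tau j i (Suc k) = Some t' \<and> t' \<le> s + 1"
      using P2[OF j] by blast
  qed
  obtain K1 where K1: "\<And>k i. K1 \<le> k \<Longrightarrow> i < N \<Longrightarrow> \<exists>t. tau j i k = Some t \<and> t + M \<le> k"
    using fr.fresh_bound[of M] by blast
  show ?thesis
  proof (rule exI[of _ K1], intro allI impI)
    fix k i assume k: "K1 \<le> k" and i: "i < N"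
    from K1[OF k i] obtain t where "tau j i k = Some t" "t + M \<le> k" by blast
    then show "subv ns (zh i k) j = subv ns (zz k) j" using inv[OF i] by simp
  qed
qed

lemma blocks_eventually: "jj \<le> N \<Longrightarrow> \<exists>K. \<forall>k\<ge>K. \<forall>i<N. \<forall>q<jj. subv ns (zh i k) q = subv ns (zz k) q"
proof (induction jj)
  case 0 then show ?case by simp
next
  case (Suc jj)
  then obtain K0 where K0: "\<And>k i q. K0 \<le> k \<Longrightarrow> i < N \<Longrightarrow> q < jj \<Longrightarrow> subv ns (zh i k) q = subv ns (zz k) q"
    by auto
  have j: "jj < N" using Suc.prems by simp
  obtain K1 where K1: "\<And>k i. K1 \<le> k \<Longrightarrow> i < N \<Longrightarrow> subv ns (zh i k) jj = subv ns (zz k) jj"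
    using block_step[OF j K0] by blast
  show ?case
  proof (rule exI[of _ "max K0 K1"], intro allI impI)
    fix k i q assume k: "max K0 K1 \<le> k" and i: "i < N" and q: "q < Suc jj"
    show "subv ns (zh i k) q = subv ns (zz k) q"
    proof (cases "q = jj")
      case True then show ?thesis using K1[of k i] k i by simp
    next
      case False then show ?thesis using K0[of k i q] k i q by simp
    qed
  qed
qed

lemma eventually_exact: "\<exists>K. \<forall>k\<ge>K. \<forall>i<N. zh i k = zz k"
proof -
  obtain K where K: "\<And>k i q. K \<le> k \<Longrightarrow> i < N \<Longrightarrow> q < N \<Longrightarrow> subv ns (zh i k) q = subv ns (zz k) q"
    using blocks_eventually[of N] by blast
  show ?thesis
  proof (rule exI[of _ K], intro allI impI)
    fix k i assume k: "K \<le> k" and i: "i < N"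
    show "zh i k = zz k" by (rule subv_eq_all[OF zh_c[OF i] zz_c offN]) (use K[OF k i] in simp)
  qed
qed

end

lemma vnorm_nonneg: "0 \<le> vnorm v" unfolding vnorm_def by (simp add: sum_nonneg)

lemma vnorm_zero: "vnorm (0\<^sub>v n) = 0" unfolding vnorm_def by simp

lemma comp_le_vnorm: "b < dim_vec v \<Longrightarrow> \<bar>v $ b\<bar> \<le> vnorm v"
proof -
  assume b: "b < dim_vec v"
  have "(v $ b)^2 \<le> (\<Sum>i<dim_vec v. (v $ i)^2)"
    by (rule member_le_sum[of b "{..<dim_vec v}" "\<lambda>i. (v $ i)^2"]) (use b in auto)
  hence "sqrt ((v $ b)^2) \<le> vnorm v" unfolding vnorm_def by (rule real_sqrt_le_mono)
  thus ?thesis by simp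
qed

lemma sumsq_le_sqsum: "finite S \<Longrightarrow> (\<Sum>a\<in>S. (x a)^2) \<le> (\<Sum>a\<in>S. \<bar>x a\<bar>)^2" for x :: "'b \<Rightarrow> real"
proof (induction S rule: finite_induct)
  case empty then show ?case by simp
next
  case (insert y F)
  have s0: "0 \<le> (\<Sum>a\<in>F. \<bar>x a\<bar>)" by (rule sum_nonneg) auto
  have "(\<Sum>a\<in>insert y F. (x a)^2) = (x y)^2 + (\<Sum>a\<in>F. (x a)^2)" using insert by simp
  also have "\<dots> \<le> (x y)^2 + (\<Sum>a\<in>F. \<bar>x a\<bar>)^2" using insert.IH by simp
  also have "\<dots> \<le> (\<bar>x y\<bar> + (\<Sum>a\<in>F. \<bar>x a\<bar>))^2"
    using s0 by (simp add: power2_eq_square algebra_simps)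
  also have "\<dots> = (\<Sum>a\<in>insert y F. \<bar>x a\<bar>)^2" using insert by simp
  finally show ?case .
qed

lemma vnorm_le_l1: "vnorm v \<le> (\<Sum>a<dim_vec v. \<bar>v $ a\<bar>)"
proof -
  have "vnorm v \<le> sqrt ((\<Sum>a<dim_vec v. \<bar>v $ a\<bar>)^2)"
    unfolding vnorm_def by (rule real_sqrt_le_mono, rule sumsq_le_sqsum) simp
  also have "\<dots> = (\<Sum>a<dim_vec v. \<bar>v $ a\<bar>)" by (simp add: sum_nonneg)
  finally show ?thesis .
qed

definition l1 :: "real mat \<Rightarrow> real" where
  "l1 M = (\<Sum>a<dim_row M. \<Sum>b<dim_col M. \<bar>M $$ (a,b)\<bar>)"

lemma mat_bound:
  assumes M: "M \<in> carrier_mat ra cb" and v: "v \<in> carrier_vec cb"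
  shows "vnorm (M *\<^sub>v v) \<le> l1 M * vnorm v"
proof -
  have comp: "\<bar>(M *\<^sub>v v) $ a\<bar> \<le> (\<Sum>b<cb. \<bar>M $$ (a,b)\<bar>) * vnorm v" if a: "a < ra" for a
  proof -
    have "\<bar>(M *\<^sub>v v) $ a\<bar> = \<bar>\<Sum>b<cb. M $$ (a,b) * v $ b\<bar>" by (simp only: mv_idx[OF M v a])
    also have "\<dots> \<le> (\<Sum>b<cb. \<bar>M $$ (a,b) * v $ b\<bar>)" by (rule sum_abs)
    also have "\<dots> \<le> (\<Sum>b<cb. \<bar>M $$ (a,b)\<bar> * vnorm v)"
    proof (rule sum_mono)
      fix b assume "b \<in> {..<cb}"
      hence "\<bar>v $ b\<bar> \<le> vnorm v" using comp_le_vnorm[of b v] v by auto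
      thus "\<bar>M $$ (a,b) * v $ b\<bar> \<le> \<bar>M $$ (a,b)\<bar> * vnorm v"
        by (simp add: abs_mult mult_left_mono)
    qed
    also have "\<dots> = (\<Sum>b<cb. \<bar>M $$ (a,b)\<bar>) * vnorm v" by (simp add: sum_distrib_right)
    finally show ?thesis .
  qed
  have "vnorm (M *\<^sub>v v) \<le> (\<Sum>a<ra. \<bar>(M *\<^sub>v v) $ a\<bar>)" using vnorm_le_l1[of "M *\<^sub>v v"] M by simp
  also have "\<dots> \<le> (\<Sum>a<ra. (\<Sum>b<cb. \<bar>M $$ (a,b)\<bar>) * vnorm v)" by (rule sum_mono) (use comp in auto)
  also have "\<dots> = l1 M * vnorm v" using M by (simp add: l1_def sum_distrib_right)
  finally show ?thesis .
qed

lemma vnorm_smult: "vnorm (c \<cdot>\<^sub>v v) = \<bar>c\<bar> * vnorm v"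
proof -
  have "(\<Sum>i<dim_vec v. ((c \<cdot>\<^sub>v v) $ i)^2) = c^2 * (\<Sum>i<dim_vec v. (v $ i)^2)"
    by (simp add: sum_distrib_left power_mult_distrib)
  hence "vnorm (c \<cdot>\<^sub>v v) = sqrt (c^2 * (\<Sum>i<dim_vec v. (v $ i)^2))" unfolding vnorm_def by simp
  also have "\<dots> = \<bar>c\<bar> * vnorm v" unfolding vnorm_def by (simp add: real_sqrt_mult)
  finally show ?thesis .
qed

lemma opnorm_bound:
  assumes M: "M \<in> carrier_mat ra cb" and v: "v \<in> carrier_vec cb"
  shows "vnorm (M *\<^sub>v v) \<le> mat_opnorm M * vnorm v"
proof -
  let ?S = "{vnorm (M *\<^sub>v u) | u. u \<in> carrier_vec (dim_col M) \<and> vnorm u \<le> 1}"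
  have bdd: "bdd_above ?S"
  proof (rule bdd_aboveI[of _ "l1 M"])
    fix x assume "x \<in> ?S"
    then obtain u where u: "x = vnorm (M *\<^sub>v u)" "u \<in> carrier_vec (dim_col M)" "vnorm u \<le> 1" by blast
    have l0: "0 \<le> l1 M" unfolding l1_def by (intro sum_nonneg) auto
    have "x \<le> l1 M * vnorm u" using mat_bound[OF M, of u] u M by auto
    also have "\<dots> \<le> l1 M * 1" by (rule mult_left_mono[OF u(3) l0])
    finally show "x \<le> l1 M" by simp
  qed
  show ?thesis
  proof (cases "vnorm v = 0")
    case True
    have "vnorm (M *\<^sub>v v) \<le> l1 M * vnorm v" by (rule mat_bound[OF M v])
    hence "vnorm (M *\<^sub>v v) \<le> 0" using True by simp
    thus ?thesis using True vnorm_nonneg[of "M *\<^sub>v v"] by simp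
  next
    case False
    hence pos: "0 < vnorm v" using vnorm_nonneg[of v] by simp
    define u where "u = (1 / vnorm v) \<cdot>\<^sub>v v"
    have uc: "u \<in> carrier_vec (dim_col M)" using v M unfolding u_def by auto
    have un: "vnorm u = 1" unfolding u_def vnorm_smult using pos by simp
    have "vnorm (M *\<^sub>v u) \<in> ?S" using uc un by auto
    hence le: "vnorm (M *\<^sub>v u) \<le> mat_opnorm M" unfolding mat_opnorm_def by (rule cSup_upper[OF _ bdd])
    have "M *\<^sub>v u = (1 / vnorm v) \<cdot>\<^sub>v (M *\<^sub>v v)" unfolding u_def by (rule mult_mat_vec[OF M v])
    hence "vnorm (M *\<^sub>v u) = vnorm (M *\<^sub>v v) / vnorm v" using pos by (simp add: vnorm_smult)
    with le have "vnorm (M *\<^sub>v v) / vnorm v \<le> mat_opnorm M" by simp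
    thus ?thesis using pos by (simp add: divide_le_eq)
  qed
qed

lemma opnorm_nonneg:
  assumes M: "M \<in> carrier_mat ra cb"
  shows "0 \<le> mat_opnorm M"
proof -
  let ?S = "{vnorm (M *\<^sub>v u) | u. u \<in> carrier_vec (dim_col M) \<and> vnorm u \<le> 1}"
  have bdd: "bdd_above ?S"
  proof (rule bdd_aboveI[of _ "l1 M"])
    fix x assume "x \<in> ?S"
    then obtain u where u: "x = vnorm (M *\<^sub>v u)" "u \<in> carrier_vec (dim_col M)" "vnorm u \<le> 1" by blast
    have l0: "0 \<le> l1 M" unfolding l1_def by (intro sum_nonneg) auto
    have "x \<le> l1 M * vnorm u" using mat_bound[OF M, of u] u M by auto
    also have "\<dots> \<le> l1 M * 1" by (rule mult_left_mono[OF u(3) l0])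
    finally show "x \<le> l1 M" by simp
  qed
  have "vnorm (M *\<^sub>v 0\<^sub>v (dim_col M)) \<in> ?S" using vnorm_zero[of "dim_col M"] by auto
  hence "vnorm (M *\<^sub>v 0\<^sub>v (dim_col M)) \<le> mat_opnorm M" unfolding mat_opnorm_def by (rule cSup_upper[OF _ bdd])
  thus ?thesis using vnorm_nonneg[of "M *\<^sub>v 0\<^sub>v (dim_col M)"] by linarith
qed

theorem theorem1:
  fixes N n Tp :: nat
    and A :: "real mat" and Cs :: "nat \<Rightarrow> real mat" and r :: "nat \<Rightarrow> nat"
    and E :: "nat \<Rightarrow> (nat \<times> nat) set"
    and T Tinv :: "real mat" and ns :: "nat \<Rightarrow> nat"
    and \<rho> :: real
  assumes A: "A \<in> carrier_mat n n"
    and C: "\<forall>i<N. Cs i \<in> carrier_mat (r i) n"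
    and obs: "observable n A (stackC r Cs N n)"
    and graph: "jointly_strongly_connected N E Tp"
    and T: "T \<in> carrier_mat n n" "Tinv \<in> carrier_mat n n"
           "T * Tinv = 1\<^sub>m n" "Tinv * T = 1\<^sub>m n"
    and ns: "(\<Sum>j<N. ns j) = n"
    and lowtri: "\<forall>j<N. \<forall>q<N. j < q \<longrightarrow> blk ns (Tinv * A * T) j q = 0\<^sub>m (ns j) (ns q)"
    and Cshape: "\<forall>i<N. \<forall>q<N. i < q \<longrightarrow> cblk ns (Cs i * T) q = 0\<^sub>m (r i) (ns q)"
    and blkobs: "\<forall>j<N. observable (ns j) (blk ns (Tinv * A * T) j j) (cblk ns (Cs j * T) j)"
    and rho: "0 < \<rho>" "\<rho> < 1"
  shows "\<exists>L :: nat \<Rightarrow> real mat. (\<forall>j<N. L j \<in> carrier_mat (ns j) (r j)) \<and>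
     (\<forall>z0 tau zh. z0 \<in> carrier_vec n \<longrightarrow>
        (let Ab = Tinv * A * T;
             z = (\<lambda>k. (Ab ^\<^sub>m k) *\<^sub>v z0);
             x = (\<lambda>k. (A ^\<^sub>m k) *\<^sub>v (T *\<^sub>v z0));
             y = (\<lambda>i k. Cs i *\<^sub>v x k)
         in alg_run N n E ns Ab (\<lambda>i. Cs i * T) L y tau zh \<longrightarrow>
            (\<exists>c \<ge> 0. \<forall>k \<ge> (2*N - 1) * (N - 1) * Tp. \<forall>i<N.
               vnorm (zh i k - z k) \<le> c * \<rho> ^ k \<and>
               vnorm (T *\<^sub>v zh i k - x k) \<le> mat_opnorm T * c * \<rho> ^ k)))"
proof -
  have ex: "\<forall>j. \<exists>Lj. j < N \<longrightarrow> Lj \<in> carrier_mat (ns j) (r j) \<and>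
      (blk ns (Tinv * A * T) j j - Lj * cblk ns (Cs j * T) j) ^\<^sub>m (ns j) = 0\<^sub>m (ns j) (ns j)"
  proof
    fix j
    show "\<exists>Lj. j < N \<longrightarrow> Lj \<in> carrier_mat (ns j) (r j) \<and>
      (blk ns (Tinv * A * T) j j - Lj * cblk ns (Cs j * T) j) ^\<^sub>m (ns j) = 0\<^sub>m (ns j) (ns j)"
    proof (cases "j < N")
      case True
      have Ajj: "blk ns (Tinv * A * T) j j \<in> carrier_mat (ns j) (ns j)" by simp
      have CT: "Cs j * T \<in> carrier_mat (r j) n" using C T True by auto
      have Cjj: "cblk ns (Cs j * T) j \<in> carrier_mat (r j) (ns j)" by (rule cblk_carrier'[OF CT])
      from deadbeat[OF Ajj Cjj] blkobs True show ?thesis by auto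
    qed auto
  qed
  from choice[OF ex] obtain L where L: "\<And>j. j < N \<Longrightarrow> L j \<in> carrier_mat (ns j) (r j) \<and>
      (blk ns (Tinv * A * T) j j - L j * cblk ns (Cs j * T) j) ^\<^sub>m (ns j) = 0\<^sub>m (ns j) (ns j)" by blast
  show ?thesis
  proof (rule exI[of _ L], rule conjI)
    show "\<forall>j<N. L j \<in> carrier_mat (ns j) (r j)" using L by blast
  next
    show "\<forall>(z0 :: real vec) tau zh. z0 \<in> carrier_vec n \<longrightarrow>
        (let Ab = Tinv * A * T;
             z = (\<lambda>k. (Ab ^\<^sub>m k) *\<^sub>v z0);
             x = (\<lambda>k. (A ^\<^sub>m k) *\<^sub>v (T *\<^sub>v z0));
             y = (\<lambda>i k. Cs i *\<^sub>v x k)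
         in alg_run N n E ns Ab (\<lambda>i. Cs i * T) L y tau zh \<longrightarrow>
            (\<exists>c \<ge> 0. \<forall>k \<ge> (2*N - 1) * (N - 1) * Tp. \<forall>i<N.
               vnorm (zh i k - z k) \<le> c * \<rho> ^ k \<and>
               vnorm (T *\<^sub>v zh i k - x k) \<le> mat_opnorm T * c * \<rho> ^ k))"
  proof (intro allI impI)
    fix z0 :: "real vec" and tau zh assume z0: "z0 \<in> carrier_vec (n :: nat)"
    show "let Ab = Tinv * A * T;
             z = (\<lambda>k. (Ab ^\<^sub>m k) *\<^sub>v z0);
             x = (\<lambda>k. (A ^\<^sub>m k) *\<^sub>v (T *\<^sub>v z0));
             y = (\<lambda>i k. Cs i *\<^sub>v x k)
         in alg_run N n E ns Ab (\<lambda>i. Cs i * T) L y tau zh \<longrightarrow>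
            (\<exists>c \<ge> 0. \<forall>k \<ge> (2*N - 1) * (N - 1) * Tp. \<forall>i<N.
               vnorm (zh i k - z k) \<le> c * \<rho> ^ k \<and>
               vnorm (T *\<^sub>v zh i k - x k) \<le> mat_opnorm T * c * \<rho> ^ k)"
      unfolding Let_def
    proof (intro impI)
      assume run: "alg_run N n E ns (Tinv * A * T) (\<lambda>i. Cs i * T) L
         (\<lambda>i k. Cs i *\<^sub>v (A ^\<^sub>m k *\<^sub>v (T *\<^sub>v z0))) tau zh"
      interpret S: sysrun N n Tp A Cs r E T Tinv ns L z0 tau zh
        by (unfold_locales) (use A C graph T ns lowtri Cshape L z0 run in auto)
      obtain K where K: "\<And>k i. K \<le> k \<Longrightarrow> i < N \<Longrightarrow> zh i k = S.zz k" using S.eventually_exact by blast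
      define Sset where "Sset = (\<lambda>(i,k). vnorm (zh i k - S.zz k) / \<rho> ^ k) ` ({..<N} \<times> {..<K})"
      define c where "c = Max (insert 0 Sset)"
      have fin: "finite (insert 0 Sset)" unfolding Sset_def by auto
      have c0: "0 \<le> c" unfolding c_def by (rule Max_ge[OF fin]) simp
      have bound: "vnorm (zh i k - S.zz k) \<le> c * \<rho> ^ k" if i: "i < N" for i k
      proof (cases "K \<le> k")
        case True
        have "zh i k - S.zz k = 0\<^sub>v n"
          using K[OF True i] S.zz_c[of k] by (intro eq_vecI) auto
        hence "vnorm (zh i k - S.zz k) = 0" by (simp add: vnorm_zero)
        thus ?thesis using c0 rho by simp
      next
        case False
        have "vnorm (zh i k - S.zz k) / \<rho> ^ k \<in> insert 0 Sset" unfolding Sset_def using i False by auto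
        hence "vnorm (zh i k - S.zz k) / \<rho> ^ k \<le> c" unfolding c_def by (rule Max_ge[OF fin])
        thus ?thesis using rho by (simp add: divide_le_eq)
      qed
      show "\<exists>c\<ge>0. \<forall>k\<ge>(2 * N - 1) * (N - 1) * Tp. \<forall>i<N.
               vnorm (zh i k - (Tinv * A * T) ^\<^sub>m k *\<^sub>v z0) \<le> c * \<rho> ^ k \<and>
               vnorm (T *\<^sub>v zh i k - A ^\<^sub>m k *\<^sub>v (T *\<^sub>v z0)) \<le> mat_opnorm T * c * \<rho> ^ k"
      proof (rule exI[of _ c], intro conjI allI impI c0)
        fix k i assume i: "i < N"
        show b1: "vnorm (zh i k - (Tinv * A * T) ^\<^sub>m k *\<^sub>v z0) \<le> c * \<rho> ^ k" using bound[OF i] by simp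
        have d: "zh i k - S.zz k \<in> carrier_vec n" by (rule minus_carrier_vec[OF S.zh_c[OF i] S.zz_c])
        have "T *\<^sub>v zh i k - A ^\<^sub>m k *\<^sub>v (T *\<^sub>v z0) = T *\<^sub>v (zh i k - S.zz k)"
          unfolding S.x_eq using T S.zh_c[OF i] S.zz_c[of k] by (simp add: mult_minus_distrib_mat_vec)
        hence "vnorm (T *\<^sub>v zh i k - A ^\<^sub>m k *\<^sub>v (T *\<^sub>v z0)) \<le> mat_opnorm T * vnorm (zh i k - S.zz k)"
          using opnorm_bound[OF T(1) d] by simp
        also have "\<dots> \<le> mat_opnorm T * (c * \<rho> ^ k)"
          by (rule mult_left_mono[OF bound[OF i] opnorm_nonneg[OF T(1)]])
        finally show "vnorm (T *\<^sub>v zh i k - A ^\<^sub>m k *\<^sub>v (T *\<^sub>v z0)) \<le> mat_opnorm T * c * \<rho> ^ k"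
          by (simp add: mult.assoc)
      qed
    qed
  qed
  qed
qed

end
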